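(* Suppose that for every agent $i$ and every date $n$, $u_{in}$ is twice continuously differentiable on $\mathbb R_{++}$ with $u_{in}'>0$, $u_{in}''<0$ and $\lim_{x\to0}u_{in}'(x)=+\infty$, and let $(\bar p,\bar x)$ be a competitive equilibrium of $\mathcal E^{N,\beta}$. Suppose $q=\alpha\bar p+u$ with $\alpha\in\mathbb R$ and $\Psi(u)=0$. Then $$q^TDz(\bar p)q=-A\alpha^2+R(u)\alpha-S(u)+M(u),$$ where $$A:=\sum_{i\in I_N}\frac{\bar r_i^0}{\bar r_i}(\bar r_{i0}+\omega_{i0}-\bar x_{i0}),\qquad S(u):=\sum_{i\in I_N}\sum_{n=1}^N\frac{\bar r_{in}}{\bar p_n}\bigl(u_n-\bar p_n\Lambda_i(u)\bigr)^2,$$ $$R(u):=\sum_{i\in I_N}\frac{\bar r_{i0}}{\bar r_i}\sum_{m=1}^N(\bar x_{im}-\omega_{im})u_m,\qquad M(u):=\sum_{i\in I_N}\frac{\bar r_i^0}{\bar r_i}\Lambda_i(u)\Bigl[\sum_{m=1}^N(\omega_{im}-\bar x_{im})u_m-\bar r_{i0}\Lambda_i(u)\Bigr].$$ Moreover, if $A>0$ then $\Psi(\bar p)>0$, so every $q\in\mathbb R^N$ admits a unique decomposition $q=\alpha\bar p+u$ with $\Psi(u)=0$.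
   Context: $\mathcal E^{N,\beta}$ is a finite exchange economy with agents $I_N$, dated commodities $0,\dots,N$, utilities $U_i(x_i)=\sum_{n=0}^N\beta^nu_{in}(x_{in})$, endowments $\omega_i\in\mathbb R_+^{N+1}$, numéraire good $0$, future prices $p\in\mathbb R^N$, and aggregate excess demand $z(p)$ for future goods; $Dz(\bar p)=(\partial z_n/\partial p_m(\bar p))_{m,n=1}^N$. At an equilibrium $(\bar p,\bar x)$: $\bar r_{in}:=u_{in}'(\bar x_{in})/(-u_{in}''(\bar x_{in}))$, $\bar r_i^0:=\sum_{n=1}^N\bar p_n\bar r_{in}$, $\bar r_i:=\bar r_{i0}+\bar r_i^0$, $\Lambda_i(q):=\sum_{n=1}^N\bar r_{in}q_n/\bar r_i^0$, and the linear functional $\Psi:\mathbb R^N\to\mathbb R$ is $\Psi(q):=\sum_{i\in I_N}\frac{2\bar r_{i0}+\omega_{i0}-\bar x_{i0}}{\bar r_i}\,\bar r_i^0\Lambda_i(q)$. *)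

theory Defs
  imports "HOL-Analysis.Analysis"
begin

text \<open>Exchange economy with dated commodities 0..N; good 0 is the numeraire (price 1),
  future prices p 1, ..., p N. Bundles and endowments are functions nat => real,
  only coordinates 0..N matter.\<close>

definition pval :: "nat \<Rightarrow> (nat \<Rightarrow> real) \<Rightarrow> (nat \<Rightarrow> real) \<Rightarrow> real" where
  "pval N p x = x 0 + (\<Sum>n=1..N. p n * x n)"

definition cons_set :: "nat \<Rightarrow> (nat \<Rightarrow> real) set" where
  "cons_set N = {x. (\<forall>n\<le>N. 0 < x n) \<and> (\<forall>n>N. x n = 0)}"

definition budget :: "nat \<Rightarrow> (nat \<Rightarrow> real) \<Rightarrow> (nat \<Rightarrow> real) \<Rightarrow> (nat \<Rightarrow> real) set" where
  "budget N p w = {x \<in> cons_set N. pval N p x \<le> pval N p w}"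

definition Util :: "nat \<Rightarrow> real \<Rightarrow> (nat \<Rightarrow> real \<Rightarrow> real) \<Rightarrow> (nat \<Rightarrow> real) \<Rightarrow> real" where
  "Util N \<beta> ui x = (\<Sum>n=0..N. \<beta> ^ n * ui n (x n))"

definition is_demand :: "nat \<Rightarrow> real \<Rightarrow> (nat \<Rightarrow> real \<Rightarrow> real) \<Rightarrow> (nat \<Rightarrow> real)
    \<Rightarrow> (nat \<Rightarrow> real) \<Rightarrow> (nat \<Rightarrow> real) \<Rightarrow> bool" where
  "is_demand N \<beta> ui w p x \<longleftrightarrow>
     x \<in> budget N p w \<and> (\<forall>y \<in> budget N p w. Util N \<beta> ui y \<le> Util N \<beta> ui x)"

definition demand :: "nat \<Rightarrow> real \<Rightarrow> (nat \<Rightarrow> real \<Rightarrow> real) \<Rightarrow> (nat \<Rightarrow> real)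
    \<Rightarrow> (nat \<Rightarrow> real) \<Rightarrow> (nat \<Rightarrow> real)" where
  "demand N \<beta> ui w p = (THE x. is_demand N \<beta> ui w p x)"

text \<open>Aggregate excess demand (component n, meaningful for future goods n = 1..N).\<close>
definition excess_demand :: "nat \<Rightarrow> real \<Rightarrow> 'a set \<Rightarrow> ('a \<Rightarrow> nat \<Rightarrow> real \<Rightarrow> real)
    \<Rightarrow> ('a \<Rightarrow> nat \<Rightarrow> real) \<Rightarrow> (nat \<Rightarrow> real) \<Rightarrow> nat \<Rightarrow> real" where
  "excess_demand N \<beta> I u \<omega> p n = (\<Sum>i\<in>I. demand N \<beta> (u i) (\<omega> i) p n - \<omega> i n)"

definition competitive_equilibrium :: "nat \<Rightarrow> real \<Rightarrow> 'a set \<Rightarrow> ('a \<Rightarrow> nat \<Rightarrow> real \<Rightarrow> real)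
    \<Rightarrow> ('a \<Rightarrow> nat \<Rightarrow> real) \<Rightarrow> (nat \<Rightarrow> real) \<Rightarrow> ('a \<Rightarrow> nat \<Rightarrow> real) \<Rightarrow> bool" where
  "competitive_equilibrium N \<beta> I u \<omega> p x \<longleftrightarrow>
     (\<forall>i\<in>I. is_demand N \<beta> (u i) (\<omega> i) p (x i)) \<and>
     (\<forall>n\<le>N. (\<Sum>i\<in>I. x i n) = (\<Sum>i\<in>I. \<omega> i n))"


text \<open>Equilibrium quantities. Here u1, u2 are the first and second derivatives of the
  period utilities, pb the equilibrium future prices, xb the equilibrium allocation.\<close>

definition rbar :: "('a \<Rightarrow> nat \<Rightarrow> real \<Rightarrow> real) \<Rightarrow> ('a \<Rightarrow> nat \<Rightarrow> real \<Rightarrow> real)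
    \<Rightarrow> ('a \<Rightarrow> nat \<Rightarrow> real) \<Rightarrow> 'a \<Rightarrow> nat \<Rightarrow> real" where
  "rbar u1 u2 xb i n = u1 i n (xb i n) / (- u2 i n (xb i n))"

definition rbar0 :: "nat \<Rightarrow> (nat \<Rightarrow> real) \<Rightarrow> ('a \<Rightarrow> nat \<Rightarrow> real \<Rightarrow> real) \<Rightarrow> ('a \<Rightarrow> nat \<Rightarrow> real \<Rightarrow> real)
    \<Rightarrow> ('a \<Rightarrow> nat \<Rightarrow> real) \<Rightarrow> 'a \<Rightarrow> real" where
  "rbar0 N pb u1 u2 xb i = (\<Sum>n=1..N. pb n * rbar u1 u2 xb i n)"

definition rbartot :: "nat \<Rightarrow> (nat \<Rightarrow> real) \<Rightarrow> ('a \<Rightarrow> nat \<Rightarrow> real \<Rightarrow> real) \<Rightarrow> ('a \<Rightarrow> nat \<Rightarrow> real \<Rightarrow> real)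
    \<Rightarrow> ('a \<Rightarrow> nat \<Rightarrow> real) \<Rightarrow> 'a \<Rightarrow> real" where
  "rbartot N pb u1 u2 xb i = rbar u1 u2 xb i 0 + rbar0 N pb u1 u2 xb i"

definition Lam :: "nat \<Rightarrow> (nat \<Rightarrow> real) \<Rightarrow> ('a \<Rightarrow> nat \<Rightarrow> real \<Rightarrow> real) \<Rightarrow> ('a \<Rightarrow> nat \<Rightarrow> real \<Rightarrow> real)
    \<Rightarrow> ('a \<Rightarrow> nat \<Rightarrow> real) \<Rightarrow> 'a \<Rightarrow> (nat \<Rightarrow> real) \<Rightarrow> real" where
  "Lam N pb u1 u2 xb i q = (\<Sum>n=1..N. rbar u1 u2 xb i n * q n) / rbar0 N pb u1 u2 xb i"

definition Psi :: "'a set \<Rightarrow> nat \<Rightarrow> (nat \<Rightarrow> real) \<Rightarrow> ('a \<Rightarrow> nat \<Rightarrow> real \<Rightarrow> real) \<Rightarrow> ('a \<Rightarrow> nat \<Rightarrow> real \<Rightarrow> real)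
    \<Rightarrow> ('a \<Rightarrow> nat \<Rightarrow> real) \<Rightarrow> ('a \<Rightarrow> nat \<Rightarrow> real) \<Rightarrow> (nat \<Rightarrow> real) \<Rightarrow> real" where
  "Psi I N pb u1 u2 \<omega> xb q = (\<Sum>i\<in>I.
     (2 * rbar u1 u2 xb i 0 + \<omega> i 0 - xb i 0) / rbartot N pb u1 u2 xb i
       * rbar0 N pb u1 u2 xb i * Lam N pb u1 u2 xb i q)"

definition Acoef :: "'a set \<Rightarrow> nat \<Rightarrow> (nat \<Rightarrow> real) \<Rightarrow> ('a \<Rightarrow> nat \<Rightarrow> real \<Rightarrow> real) \<Rightarrow> ('a \<Rightarrow> nat \<Rightarrow> real \<Rightarrow> real)
    \<Rightarrow> ('a \<Rightarrow> nat \<Rightarrow> real) \<Rightarrow> ('a \<Rightarrow> nat \<Rightarrow> real) \<Rightarrow> real" where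
  "Acoef I N pb u1 u2 \<omega> xb = (\<Sum>i\<in>I. rbar0 N pb u1 u2 xb i / rbartot N pb u1 u2 xb i
       * (rbar u1 u2 xb i 0 + \<omega> i 0 - xb i 0))"

definition Sfun :: "'a set \<Rightarrow> nat \<Rightarrow> (nat \<Rightarrow> real) \<Rightarrow> ('a \<Rightarrow> nat \<Rightarrow> real \<Rightarrow> real) \<Rightarrow> ('a \<Rightarrow> nat \<Rightarrow> real \<Rightarrow> real)
    \<Rightarrow> ('a \<Rightarrow> nat \<Rightarrow> real) \<Rightarrow> (nat \<Rightarrow> real) \<Rightarrow> real" where
  "Sfun I N pb u1 u2 xb v = (\<Sum>i\<in>I. \<Sum>n=1..N.
       rbar u1 u2 xb i n / pb n * (v n - pb n * Lam N pb u1 u2 xb i v)^2)"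

definition Rfun :: "'a set \<Rightarrow> nat \<Rightarrow> (nat \<Rightarrow> real) \<Rightarrow> ('a \<Rightarrow> nat \<Rightarrow> real \<Rightarrow> real) \<Rightarrow> ('a \<Rightarrow> nat \<Rightarrow> real \<Rightarrow> real)
    \<Rightarrow> ('a \<Rightarrow> nat \<Rightarrow> real) \<Rightarrow> ('a \<Rightarrow> nat \<Rightarrow> real) \<Rightarrow> (nat \<Rightarrow> real) \<Rightarrow> real" where
  "Rfun I N pb u1 u2 \<omega> xb v = (\<Sum>i\<in>I. rbar u1 u2 xb i 0 / rbartot N pb u1 u2 xb i
       * (\<Sum>m=1..N. (xb i m - \<omega> i m) * v m))"

definition Mfun :: "'a set \<Rightarrow> nat \<Rightarrow> (nat \<Rightarrow> real) \<Rightarrow> ('a \<Rightarrow> nat \<Rightarrow> real \<Rightarrow> real) \<Rightarrow> ('a \<Rightarrow> nat \<Rightarrow> real \<Rightarrow> real)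
    \<Rightarrow> ('a \<Rightarrow> nat \<Rightarrow> real) \<Rightarrow> ('a \<Rightarrow> nat \<Rightarrow> real) \<Rightarrow> (nat \<Rightarrow> real) \<Rightarrow> real" where
  "Mfun I N pb u1 u2 \<omega> xb v = (\<Sum>i\<in>I. rbar0 N pb u1 u2 xb i / rbartot N pb u1 u2 xb i
       * Lam N pb u1 u2 xb i v
       * ((\<Sum>m=1..N. (\<omega> i m - xb i m) * v m) - rbar u1 u2 xb i 0 * Lam N pb u1 u2 xb i v))"

end

theory Submission
  imports Defs
begin
definition good :: "(real\<Rightarrow>real) \<Rightarrow> (real\<Rightarrow>real) \<Rightarrow> (real\<Rightarrow>real) \<Rightarrow> bool" where
 "good f f1 f2 \<longleftrightarrow> (\<forall>x>0. (f has_real_derivative f1 x) (at x)) \<and> (\<forall>x>0. (f1 has_real_derivative f2 x) (at x))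
    \<and> (\<forall>x>0. 0 < f1 x) \<and> (\<forall>x>0. f2 x < 0)"

lemma good_D1: "good f f1 f2 \<Longrightarrow> 0 < x \<Longrightarrow> (f has_real_derivative f1 x) (at x)"
  unfolding good_def by blast
lemma good_D2: "good f f1 f2 \<Longrightarrow> 0 < x \<Longrightarrow> (f1 has_real_derivative f2 x) (at x)"
  unfolding good_def by blast
lemma good_pos: "good f f1 f2 \<Longrightarrow> 0 < x \<Longrightarrow> 0 < f1 x"
  unfolding good_def by blast
lemma good_neg: "good f f1 f2 \<Longrightarrow> 0 < x \<Longrightarrow> f2 x < 0"
  unfolding good_def by blast

lemma good_dec: assumes g: "good f f1 f2" and "0 < a" "a < b" shows "f1 b < f1 a"
proof (rule DERIV_neg_imp_decreasing[OF assms(3)])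
  fix x assume "a \<le> x" "x \<le> b"
  then have "0 < x" using assms by simp
  then show "\<exists>y. (f1 has_real_derivative y) (at x) \<and> y < 0"
    using good_D2[OF g] good_neg[OF g] by blast
qed

lemma good_inc: assumes g: "good f f1 f2" and "0 < a" "a < b" shows "f a < f b"
proof (rule DERIV_pos_imp_increasing[OF assms(3)])
  fix x assume "a \<le> x" "x \<le> b"
  then have "0 < x" using assms by simp
  then show "\<exists>y. (f has_real_derivative y) (at x) \<and> y > 0"
    using good_D1[OF g] good_pos[OF g] by blast
qed

lemma good_conc: assumes g: "good f f1 f2" and "0 < a" "0 < b" "a \<noteq> b"
  shows "f b < f a + f1 a * (b - a)"
proof (cases "a < b")
  case True
  have "\<forall>x. a \<le> x \<and> x \<le> b \<longrightarrow> (f has_real_derivative f1 x) (at x)"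
    using good_D1[OF g] assms by simp
  then obtain z where z: "a < z" "z < b" "f b - f a = (b - a) * f1 z"
    using MVT2[of a b f f1] True by blast
  have "f1 z < f1 a" using good_dec[OF g, of a z] z assms by simp
  then have "(b - a) * f1 z < (b - a) * f1 a" using True by simp
  then show ?thesis using z by (simp add: algebra_simps)
next
  case False
  then have ba: "b < a" using assms by simp
  have "\<forall>x. b \<le> x \<and> x \<le> a \<longrightarrow> (f has_real_derivative f1 x) (at x)"
    using good_D1[OF g] assms by simp
  then obtain z where z: "b < z" "z < a" "f a - f b = (a - b) * f1 z"
    using MVT2[of b a f f1] ba by blast
  have "f1 a < f1 z" using good_dec[OF g, of z a] z assms by simp
  then have "(a - b) * f1 a < (a - b) * f1 z" using ba by simp
  then show ?thesis using z by (simp add: algebra_simps)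
qed

lemma good_conc_le: assumes g: "good f f1 f2" and "0 < a" "0 < b"
  shows "f b \<le> f a + f1 a * (b - a)"
  using good_conc[OF assms] by (cases "a = b") auto

lemma good_inj: assumes g: "good f f1 f2" shows "inj_on f1 {0<..}"
proof (rule inj_onI)
  fix x y :: real assume "x \<in> {0<..}" "y \<in> {0<..}" "f1 x = f1 y"
  then show "x = y" using good_dec[OF g, of x y] good_dec[OF g, of y x]
    by (cases x y rule: linorder_cases) auto
qed

lemma good_cont: assumes g: "good f f1 f2" "0 < x" shows "isCont f1 x"
  using good_D2[OF assms] by (rule DERIV_isCont)

definition hinv :: "(real\<Rightarrow>real) \<Rightarrow> real \<Rightarrow> real" where
  "hinv f1 = the_inv_into {0<..} f1"

lemma good_h_f1: assumes g: "good f f1 f2" "0 < x" shows "hinv f1 (f1 x) = x"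
  unfolding hinv_def using the_inv_into_f_f[OF good_inj[OF g(1)]] assms by auto

lemma good_f1_h: assumes g: "good f f1 f2" "y \<in> f1 ` {0<..}" shows "f1 (hinv f1 y) = y" "0 < hinv f1 y"
proof -
  obtain x where "0 < x" "y = f1 x" using g(2) by blast
  then show "f1 (hinv f1 y) = y" "0 < hinv f1 y" using good_h_f1[OF g(1)] by simp_all
qed

lemma good_open: assumes g: "good f f1 f2" shows "open (f1 ` {0<..})"
proof (rule openI)
  fix y assume "y \<in> f1 ` {0<..}"
  then obtain x where x: "0 < x" "y = f1 x" by auto
  define e where "e = min (y - f1 (2*x)) (f1 (x/2) - y)"
  have e: "0 < e" using good_dec[OF g, of x "2*x"] good_dec[OF g, of "x/2" x] x by (auto simp: e_def)
  have "ball y e \<subseteq> f1 ` {0<..}"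
  proof
    fix z assume "z \<in> ball y e"
    then have z: "f1 (2*x) \<le> z" "z \<le> f1 (x/2)" by (auto simp: e_def dist_real_def)
    have "\<exists>w. x/2 \<le> w \<and> w \<le> 2*x \<and> f1 w = z"
      apply (rule IVT2[of f1 "2*x" z "x/2"])
      using z x good_cont[OF g] by auto
    then obtain w where "x/2 \<le> w" "w \<le> 2*x" "f1 w = z" by blast
    then show "z \<in> f1 ` {0<..}" using x by force
  qed
  then show "\<exists>e>0. ball y e \<subseteq> f1 ` {0<..}" using e by blast
qed

lemma good_h_cont: assumes g: "good f f1 f2" "y \<in> f1 ` {0<..}" shows "isCont (hinv f1) y"
proof -
  obtain x where x: "0 < x" "y = f1 x" using assms by auto
  have "isCont (hinv f1) (f1 x)"
  proof (rule isCont_inverse_function[where d="x/2" and f=f1 and g="hinv f1" and x=x])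
    fix z assume "\<bar>z - x\<bar> \<le> x/2"
    then have "0 < z" using x by linarith
    then show "hinv f1 (f1 z) = z" "isCont f1 z" using good_h_f1[OF g(1)] good_cont[OF g(1)] by auto
  qed (use x in simp)
  then show ?thesis using x by simp
qed

lemma good_h_dec: assumes g: "good f f1 f2" "y1 \<in> f1 ` {0<..}" "y2 \<in> f1 ` {0<..}" "y1 < y2"
  shows "hinv f1 y2 < hinv f1 y1"
proof (rule ccontr)
  assume "\<not> ?thesis"
  then have "hinv f1 y1 \<le> hinv f1 y2" by simp
  have p1: "0 < hinv f1 y1" using good_f1_h[OF g(1) g(2)] by simp
  have "f1 (hinv f1 y2) \<le> f1 (hinv f1 y1)"
  proof (cases "hinv f1 y1 = hinv f1 y2")
    case True then show ?thesis by simp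
  next
    case False
    then show ?thesis using good_dec[OF g(1) p1, of "hinv f1 y2"] \<open>hinv f1 y1 \<le> hinv f1 y2\<close> by simp
  qed
  then show False using good_f1_h(1)[OF g(1) g(2)] good_f1_h(1)[OF g(1) g(3)] g(4) by simp
qed

lemma good_h_deriv: assumes g: "good f f1 f2" "0 < x"
  shows "(hinv f1 has_real_derivative inverse (f2 x)) (at (f1 x))"
proof -
  have yR: "f1 x \<in> f1 ` {0<..}" using assms by auto
  obtain e where e: "e > 0" "ball (f1 x) e \<subseteq> f1 ` {0<..}"
    using good_open[OF g(1)] yR openE by blast
  show ?thesis
  proof (rule DERIV_inverse_function[where a="f1 x - e" and b="f1 x + e"])
    show "(f1 has_real_derivative f2 x) (at (hinv f1 (f1 x)))"
      using good_D2[OF assms] good_h_f1[OF assms] by simp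
    show "f2 x \<noteq> 0" using good_neg[OF assms] by simp
    show "f1 x - e < f1 x" "f1 x < f1 x + e" using e by auto
    show "isCont (hinv f1) (f1 x)" using good_h_cont[OF g(1) yR] .
    fix z assume "f1 x - e < z" "z < f1 x + e"
    then have "z \<in> ball (f1 x) e" by (simp add: dist_real_def abs_if)
    then show "f1 (hinv f1 z) = z" using e good_f1_h[OF g(1)] by auto
  qed
qed

lemma root_family:
  fixes G :: "real \<Rightarrow> real \<Rightarrow> real" and l0 t0 \<delta> \<eta> :: real
  assumes dpos: "0 < \<delta>" and epos: "0 < \<eta>"
  and mono: "\<And>t a b. \<bar>t - t0\<bar> < \<eta> \<Longrightarrow> l0 - \<delta> \<le> a \<Longrightarrow> a < b \<Longrightarrow> b \<le> l0 + \<delta> \<Longrightarrow> G b t < G a t"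
  and contl: "\<And>t. \<bar>t - t0\<bar> < \<eta> \<Longrightarrow> continuous_on {l0-\<delta>..l0+\<delta>} (\<lambda>a. G a t)"
  and contt: "\<And>a. l0 - \<delta> \<le> a \<Longrightarrow> a \<le> l0 + \<delta> \<Longrightarrow> isCont (G a) t0"
  and G0: "G l0 t0 = 0"
  and ldef: "l = (\<lambda>t. THE a. \<bar>a - l0\<bar> < \<delta> \<and> G a t = 0)"
  shows "l t0 = l0" "isCont l t0" "\<forall>\<^sub>F t in nhds t0. \<bar>l t - l0\<bar> < \<delta> \<and> G (l t) t = 0"
proof -
  have uniq: "a1 = a2" if "\<bar>t - t0\<bar> < \<eta>" "\<bar>a1 - l0\<bar> < \<delta>" "\<bar>a2 - l0\<bar> < \<delta>" "G a1 t = 0" "G a2 t = 0" for t a1 a2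
  proof (rule ccontr)
    assume "a1 \<noteq> a2"
    then consider "a1 < a2" | "a2 < a1" by linarith
    then show False
    proof cases
      case 1 then show False using mono[of t a1 a2] that unfolding abs_less_iff by linarith
    next
      case 2 then show False using mono[of t a2 a1] that unfolding abs_less_iff by linarith
    qed
  qed
  have lchar: "l t = a" if "\<bar>t - t0\<bar> < \<eta>" "\<bar>a - l0\<bar> < \<delta>" "G a t = 0" for t a
    unfolding ldef
    by (rule the_equality) (use that uniq[of t] in auto)
  show l0: "l t0 = l0" using lchar[of t0 l0] dpos epos G0 by simp
  have ev: "\<forall>\<^sub>F t in nhds t0. \<bar>l t - l0\<bar> < \<epsilon> \<and> G (l t) t = 0" if eps: "0 < \<epsilon>" "\<epsilon> \<le> \<delta>" for \<epsilon>
  proof -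
    have gm: "0 < G (l0 - \<epsilon>) t0" using mono[of t0 "l0 - \<epsilon>" l0] that epos G0 by simp
    have gp: "G (l0 + \<epsilon>) t0 < 0" using mono[of t0 l0 "l0 + \<epsilon>"] that epos dpos G0 by simp
    have "((G (l0 - \<epsilon>)) \<longlongrightarrow> G (l0 - \<epsilon>) t0) (nhds t0)"
      using contt[of "l0 - \<epsilon>"] that by (simp add: isCont_def tendsto_at_iff_tendsto_nhds)
    then have e1: "\<forall>\<^sub>F t in nhds t0. 0 < G (l0 - \<epsilon>) t" using gm order_tendstoD(1) by blast
    have "((G (l0 + \<epsilon>)) \<longlongrightarrow> G (l0 + \<epsilon>) t0) (nhds t0)"
      using contt[of "l0 + \<epsilon>"] that by (simp add: isCont_def tendsto_at_iff_tendsto_nhds)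
    then have e2: "\<forall>\<^sub>F t in nhds t0. G (l0 + \<epsilon>) t < 0" using gp order_tendstoD(2) by blast
    have e3: "\<forall>\<^sub>F t in nhds t0. \<bar>t - t0\<bar> < \<eta>"
      using eventually_nhds_metric[of _ t0] epos by (auto simp: dist_real_def intro!: exI[of _ \<eta>])
    show ?thesis using e1 e2 e3
    proof eventually_elim
      case (elim t)
      have "continuous_on {l0-\<epsilon>..l0+\<epsilon>} (\<lambda>a. G a t)"
        by (rule continuous_on_subset[OF contl[OF elim(3)]]) (use eps in auto)
      then obtain a where a: "l0 - \<epsilon> \<le> a" "a \<le> l0 + \<epsilon>" "G a t = 0"
        using IVT2'[where f="\<lambda>a. G a t" and a="l0 - \<epsilon>" and y=0 and b="l0 + \<epsilon>"] elim eps by force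
      have "a \<noteq> l0 - \<epsilon>" "a \<noteq> l0 + \<epsilon>" using a elim by auto
      then have "\<bar>a - l0\<bar> < \<epsilon>" using a by auto
      then have "l t = a" using lchar[of t a] elim a eps by auto
      then show ?case using a \<open>\<bar>a - l0\<bar> < \<epsilon>\<close> by simp
    qed
  qed
  show "\<forall>\<^sub>F t in nhds t0. \<bar>l t - l0\<bar> < \<delta> \<and> G (l t) t = 0" using ev[of \<delta>] dpos by simp
  have "(l \<longlongrightarrow> l0) (nhds t0)"
  proof (rule tendstoI)
    fix e :: real assume "0 < e"
    then have "\<forall>\<^sub>F t in nhds t0. \<bar>l t - l0\<bar> < min e \<delta>" using ev[of "min e \<delta>"] dpos
      by (auto elim: eventually_mono)
    then show "\<forall>\<^sub>F t in nhds t0. dist (l t) l0 < e"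
      by (auto simp: dist_real_def elim: eventually_mono)
  qed
  then show "isCont l t0" unfolding isCont_def using l0 by (metis at_within_le_nhds tendsto_mono)
qed

lemma ift_core:
  fixes a b e dl dt n :: real
  assumes a: "a \<noteq> 0" and e: "0 \<le> e" "e \<le> \<bar>a\<bar>/2"
  and n: "n \<le> \<bar>dl\<bar> + \<bar>dt\<bar>" and c: "\<bar>a * dl + b * dt\<bar> \<le> e * n"
  shows "\<bar>a * dl + b * dt\<bar> \<le> e * (2 + 2*\<bar>b\<bar>/\<bar>a\<bar>) * \<bar>dt\<bar>"
proof -
  have A: "0 < \<bar>a\<bar>" using a by simp
  have c2: "\<bar>a * dl + b * dt\<bar> \<le> e * \<bar>dl\<bar> + e * \<bar>dt\<bar>"
    using c mult_left_mono[OF n e(1)] by (simp add: algebra_simps)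
  have "\<bar>a\<bar> * \<bar>dl\<bar> \<le> \<bar>a * dl + b * dt\<bar> + \<bar>b\<bar> * \<bar>dt\<bar>"
    by (metis abs_mult abs_triangle_ineq4 add_diff_cancel_right' abs_minus_commute abs_triangle_ineq2 order_trans add.commute diff_le_eq)
  then have "\<bar>a\<bar> * \<bar>dl\<bar> \<le> e * \<bar>dl\<bar> + e * \<bar>dt\<bar> + \<bar>b\<bar> * \<bar>dt\<bar>" using c2 by linarith
  moreover have "e * \<bar>dl\<bar> \<le> \<bar>a\<bar>/2 * \<bar>dl\<bar>" using mult_right_mono[OF e(2), of "\<bar>dl\<bar>"] by simp
  moreover have "e * \<bar>dt\<bar> \<le> \<bar>a\<bar>/2 * \<bar>dt\<bar>" using mult_right_mono[OF e(2), of "\<bar>dt\<bar>"] by simp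
  ultimately have "\<bar>a\<bar>/2 * \<bar>dl\<bar> \<le> (\<bar>a\<bar>/2 + \<bar>b\<bar>) * \<bar>dt\<bar>" by (simp add: algebra_simps)
  then have dl: "\<bar>dl\<bar> \<le> (1 + 2*\<bar>b\<bar>/\<bar>a\<bar>) * \<bar>dt\<bar>" using A by (simp add: field_simps)
  have "e * \<bar>dl\<bar> \<le> e * ((1 + 2*\<bar>b\<bar>/\<bar>a\<bar>) * \<bar>dt\<bar>)" using mult_left_mono[OF dl e(1)] .
  then show ?thesis using c2 by (simp add: algebra_simps)
qed

lemma ift1:
  fixes G :: "real \<Rightarrow> real \<Rightarrow> real" and l :: "real \<Rightarrow> real"
  assumes der: "((\<lambda>z. G (fst z) (snd z)) has_derivative (\<lambda>z. a * fst z + b * snd z)) (at (l0, t0))"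
  and a: "a \<noteq> 0" and G0: "G l0 t0 = 0" and cont: "isCont l t0" and lt0: "l t0 = l0"
  and ev: "\<forall>\<^sub>F t in nhds t0. G (l t) t = 0"
  shows "(l has_real_derivative (- b / a)) (at t0)"
  unfolding has_field_derivative_iff LIM_eq
proof (intro allI impI)
  fix r :: real assume r: "0 < r"
  define K where "K = 2 + 2*\<bar>b\<bar>/\<bar>a\<bar>"
  have K: "0 < K" unfolding K_def by (simp add: add_pos_nonneg)
  define e where "e = min (\<bar>a\<bar>/2) (\<bar>a\<bar> * r / (2 * K))"
  have e: "0 < e" "e \<le> \<bar>a\<bar>/2" "e \<le> \<bar>a\<bar> * r / (2 * K)" using a r K by (auto simp: e_def)
  obtain d1 where d1: "d1 > 0" "\<And>y. norm (y - (l0,t0)) < d1 \<Longrightarrow>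
      norm (G (fst y) (snd y) - G l0 t0 - (a * fst (y - (l0,t0)) + b * snd (y - (l0,t0)))) \<le> e * norm (y - (l0,t0))"
    using der e(1) unfolding has_derivative_at_alt by force
  have "(l \<longlongrightarrow> l0) (at t0)" using cont lt0 by (simp add: isCont_def)
  then obtain d2 where d2: "d2 > 0" "\<And>y. y \<noteq> t0 \<Longrightarrow> norm (y - t0) < d2 \<Longrightarrow> norm (l y - l0) < d1/2"
    using d1(1) unfolding LIM_eq by (metis half_gt_zero)
  obtain d3 where d3: "d3 > 0" "\<And>y. dist y t0 < d3 \<Longrightarrow> G (l y) y = 0"
    using ev unfolding eventually_nhds_metric by blast
  define d where "d = min (d1/2) (min d2 d3)"
  have "d > 0" using d1 d2 d3 by (simp add: d_def)
  moreover have "norm ((l y - l t0) / (y - t0) - - b / a) < r" if y: "y \<noteq> t0" "norm (y - t0) < d" for y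
  proof -
    define dl where "dl = l y - l0"
    define dt where "dt = y - t0"
    have dt0: "dt \<noteq> 0" using y by (simp add: dt_def)
    have nrm: "norm ((l y, y) - (l0, t0)) \<le> \<bar>dl\<bar> + \<bar>dt\<bar>"
      by (simp add: norm_Pair dl_def dt_def sqrt_sum_squares_le_sum_abs)
    have "\<bar>dl\<bar> < d1/2" using d2(2)[OF y(1)] y(2) by (simp add: d_def dl_def)
    moreover have "\<bar>dt\<bar> < d1/2" using y(2) by (simp add: d_def dt_def)
    ultimately have "norm ((l y, y) - (l0, t0)) < d1" using nrm by linarith
    from d1(2)[OF this] have "\<bar>G (l y) y - G l0 t0 - (a * dl + b * dt)\<bar> \<le> e * norm ((l y, y) - (l0, t0))"
      by (simp add: dl_def dt_def)
    moreover have "G (l y) y = 0" using d3(2)[of y] y(2) by (simp add: d_def dist_real_def)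
    ultimately have "\<bar>a * dl + b * dt\<bar> \<le> e * norm ((l y, y) - (l0, t0))" using G0 by simp
    from ift_core[OF a less_imp_le[OF e(1)] e(2) nrm this]
    have c: "\<bar>a * dl + b * dt\<bar> \<le> e * K * \<bar>dt\<bar>" by (simp add: K_def)
    have "e * K \<le> \<bar>a\<bar> * r / 2" using e(3) K by (simp add: field_simps)
    then have "\<bar>a * dl + b * dt\<bar> \<le> \<bar>a\<bar> * r / 2 * \<bar>dt\<bar>"
      using c mult_right_mono[of "e*K" "\<bar>a\<bar> * r / 2" "\<bar>dt\<bar>"] by simp
    then have q: "\<bar>a * dl + b * dt\<bar> / (\<bar>a\<bar> * \<bar>dt\<bar>) \<le> r / 2"
      using a dt0 by (simp add: field_simps)
    have "(l y - l t0) / (y - t0) - - b / a = (a * dl + b * dt) / (a * dt)"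
      using a dt0 lt0 by (simp add: dl_def dt_def field_simps)
    then have "norm ((l y - l t0) / (y - t0) - - b / a) = \<bar>a * dl + b * dt\<bar> / (\<bar>a\<bar> * \<bar>dt\<bar>)"
      by (simp add: abs_mult)
    then show ?thesis using q r by linarith
  qed
  ultimately show "\<exists>s>0. \<forall>x. x \<noteq> t0 \<and> norm (x - t0) < s \<longrightarrow> norm ((l x - l t0) / (x - t0) - - b / a) < r"
    by blast
qed

lemma pval_line: "pval N p (\<lambda>k. x k + s * c k) = pval N p x + s * pval N p c"
  by (simp add: pval_def sum.distrib sum_distrib_left algebra_simps)

lemma sum_split0: "(\<Sum>k=0..(N::nat). f k) = f 0 + (\<Sum>k=1..N. f k)"
  using sum.atLeast_Suc_atMost[of 0 N f] by simp

lemma util_le_lin: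
  assumes goods: "\<forall>n\<le>N. good (ui n) (u1i n) (u2i n)" and beta: "0 < \<beta>"
  and x: "x \<in> cons_set N" and y: "y \<in> cons_set N"
  and lam: "u1i 0 (x 0) = L" "\<forall>n\<in>{1..N}. \<beta>^n * u1i n (x n) = L * p n"
  shows "Util N \<beta> ui y \<le> Util N \<beta> ui x + L * (pval N p y - pval N p x)"
    "y \<noteq> x \<Longrightarrow> Util N \<beta> ui y < Util N \<beta> ui x + L * (pval N p y - pval N p x)"
proof -
  have xp: "\<And>k. k \<le> N \<Longrightarrow> 0 < x k" and yp: "\<And>k. k \<le> N \<Longrightarrow> 0 < y k"
    using x y by (auto simp: cons_set_def)
  have lin: "(\<Sum>k=0..N. \<beta>^k * (u1i k (x k) * (y k - x k))) = L * (pval N p y - pval N p x)"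
  proof -
    have "(\<Sum>k=1..N. \<beta>^k * (u1i k (x k) * (y k - x k))) = (\<Sum>k=1..N. L * (p k * y k - p k * x k))"
    proof (rule sum.cong)
      fix k assume "k \<in> {1..N}"
      then have "\<beta>^k * u1i k (x k) = L * p k" using lam by blast
      then show "\<beta>^k * (u1i k (x k) * (y k - x k)) = L * (p k * y k - p k * x k)"
        by (metis (no_types, lifting) mult.assoc right_diff_distrib)
    qed simp
    then show ?thesis using lam
      by (simp add: sum_split0 pval_def sum_subtractf sum_distrib_left[symmetric] algebra_simps)
  qed
  have term_le: "\<beta>^k * ui k (y k) \<le> \<beta>^k * ui k (x k) + \<beta>^k * (u1i k (x k) * (y k - x k))" if "k \<in> {0..N}" for k
  proof -
    have "ui k (y k) \<le> ui k (x k) + u1i k (x k) * (y k - x k)"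
      using good_conc_le[of "ui k" "u1i k" "u2i k" "x k" "y k"] goods xp yp that by auto
    then show ?thesis using beta by (simp add: distrib_left[symmetric])
  qed
  have U: "Util N \<beta> ui y \<le> (\<Sum>k=0..N. \<beta>^k * ui k (x k) + \<beta>^k * (u1i k (x k) * (y k - x k)))"
    unfolding Util_def by (rule sum_mono) (use term_le in auto)
  then show "Util N \<beta> ui y \<le> Util N \<beta> ui x + L * (pval N p y - pval N p x)"
    by (simp add: sum.distrib Util_def lin)
  assume "y \<noteq> x"
  then obtain k where k: "y k \<noteq> x k" by blast
  have kN: "k \<le> N"
  proof (rule ccontr)
    assume "\<not> k \<le> N" then show False using x y k by (auto simp: cons_set_def)
  qed
  have "\<beta>^k * ui k (y k) < \<beta>^k * ui k (x k) + \<beta>^k * (u1i k (x k) * (y k - x k))"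
  proof -
    have "ui k (y k) < ui k (x k) + u1i k (x k) * (y k - x k)"
      using good_conc[of "ui k" "u1i k" "u2i k" "x k" "y k"] goods xp yp kN k by auto
    then show ?thesis using beta by (simp add: distrib_left[symmetric])
  qed
  then have "Util N \<beta> ui y < (\<Sum>k=0..N. \<beta>^k * ui k (x k) + \<beta>^k * (u1i k (x k) * (y k - x k)))"
    unfolding Util_def by (intro sum_strict_mono_ex1) (use term_le kN in auto)
  then show "Util N \<beta> ui y < Util N \<beta> ui x + L * (pval N p y - pval N p x)"
    by (simp add: sum.distrib Util_def lin)
qed

lemma demand_char:
  assumes goods: "\<forall>n\<le>N. good (ui n) (u1i n) (u2i n)" and beta: "0 < \<beta>"
  and x: "x \<in> cons_set N" and bud: "pval N p x = pval N p w"
  and lam: "0 < L" "u1i 0 (x 0) = L" "\<forall>n\<in>{1..N}. \<beta>^n * u1i n (x n) = L * p n"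
  shows "demand N \<beta> ui w p = x"
proof -
  have dx: "is_demand N \<beta> ui w p x"
    unfolding is_demand_def
  proof
    show "x \<in> budget N p w" using x bud by (simp add: budget_def)
    show "\<forall>y\<in>budget N p w. Util N \<beta> ui y \<le> Util N \<beta> ui x"
    proof
      fix y assume y: "y \<in> budget N p w"
      then have "pval N p y - pval N p x \<le> 0" using bud by (simp add: budget_def)
      then have "L * (pval N p y - pval N p x) \<le> 0" using lam(1) by (simp add: mult_nonneg_nonpos)
      then show "Util N \<beta> ui y \<le> Util N \<beta> ui x"
        using util_le_lin(1)[OF goods beta x _ lam(2,3)] y by (force simp: budget_def)
    qed
  qed
  show ?thesis unfolding demand_def
  proof (rule the_equality)
    show "is_demand N \<beta> ui w p x" by fact
    fix y assume dy: "is_demand N \<beta> ui w p y"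
    show "y = x"
    proof (rule ccontr)
      assume yx: "y \<noteq> x"
      have yb: "y \<in> budget N p w" using dy by (simp add: is_demand_def)
      then have "pval N p y - pval N p x \<le> 0" using bud by (simp add: budget_def)
      then have "L * (pval N p y - pval N p x) \<le> 0" using lam(1) by (simp add: mult_nonneg_nonpos)
      moreover have "Util N \<beta> ui y < Util N \<beta> ui x + L * (pval N p y - pval N p x)"
        using util_le_lin(2)[OF goods beta x _ lam(2,3) yx] yb by (simp add: budget_def)
      moreover have "Util N \<beta> ui x \<le> Util N \<beta> ui y"
        using dy dx by (simp add: is_demand_def)
      ultimately show False by linarith
    qed
  qed
qed

lemma deriv_line:
  assumes goods: "\<forall>n\<le>N. good (ui n) (u1i n) (u2i n)"
  and xp: "\<forall>k\<le>N. 0 < x k"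
  shows "((\<lambda>s. Util N \<beta> ui (\<lambda>k. x k + s * c k)) has_real_derivative
           (\<Sum>k=0..N. \<beta>^k * (u1i k (x k) * c k))) (at 0)"
  unfolding Util_def
proof (rule DERIV_sum)
  fix k assume "k \<in> {0..N}"
  then have "(ui k has_real_derivative u1i k (x k)) (at (x k + 0 * c k))"
    using good_D1[of "ui k" "u1i k" "u2i k" "x k"] goods xp by simp
  then have "((\<lambda>s. ui k (x k + s * c k)) has_real_derivative u1i k (x k) * c k) (at 0)"
    by (rule DERIV_chain2) (auto intro!: derivative_eq_intros)
  then show "((\<lambda>s. \<beta>^k * ui k (x k + s * c k)) has_real_derivative \<beta>^k * (u1i k (x k) * c k)) (at 0)"
    by (rule DERIV_cmult)
qed

lemma util_strict:
  assumes goods: "\<forall>n\<le>N. good (ui n) (u1i n) (u2i n)" and beta: "0 < \<beta>"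
  and xp: "\<forall>k\<le>N. 0 < x k" and n: "n \<le> N" and s: "0 < s"
  shows "Util N \<beta> ui x < Util N \<beta> ui (\<lambda>k. x k + s * (if k = n then 1 else 0))"
  unfolding Util_def
proof (rule sum_strict_mono_ex1)
  show "\<forall>k\<in>{0..N}. \<beta>^k * ui k (x k) \<le> \<beta>^k * ui k (x k + s * (if k = n then 1 else 0))"
  proof
    fix k assume k: "k \<in> {0..N}"
    show "\<beta>^k * ui k (x k) \<le> \<beta>^k * ui k (x k + s * (if k = n then 1 else 0))"
    proof (cases "k = n")
      case True
      then have "ui k (x k) < ui k (x k + s)" using good_inc[of "ui k" "u1i k" "u2i k" "x k" "x k + s"] goods xp k s by auto
      then show ?thesis using True beta by simp
    qed simp
  qed
  have "ui n (x n) < ui n (x n + s)" using good_inc[of "ui n" "u1i n" "u2i n" "x n" "x n + s"] goods xp n s by auto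
  then show "\<exists>k\<in>{0..N}. \<beta>^k * ui k (x k) < \<beta>^k * ui k (x k + s * (if k = n then 1 else 0))"
    using n beta by (intro bexI[of _ n]) auto
qed simp

lemma cons_line: "x \<in> cons_set N \<Longrightarrow> (\<forall>k>N. c k = 0) \<Longrightarrow> (\<forall>k\<le>N. 0 < x k + s * c k) \<Longrightarrow> (\<lambda>k. x k + s * c k) \<in> cons_set N"
  by (auto simp: cons_set_def)

lemma eq_props:
  assumes goods: "\<forall>n\<le>N. good (ui n) (u1i n) (u2i n)" and beta: "0 < \<beta>"
  and dem: "is_demand N \<beta> ui w p x"
  shows "\<forall>n\<in>{1..N}. 0 < p n" "pval N p x = pval N p w"
    "\<forall>n\<in>{1..N}. \<beta>^n * u1i n (x n) = u1i 0 (x 0) * p n"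
proof -
  have x: "x \<in> cons_set N" and xb: "pval N p x \<le> pval N p w"
    and opt: "\<And>y. y \<in> budget N p w \<Longrightarrow> Util N \<beta> ui y \<le> Util N \<beta> ui x"
    using dem by (auto simp: is_demand_def budget_def)
  have xp: "\<forall>k\<le>N. 0 < x k" using x by (simp add: cons_set_def)
  define e where "e = (\<lambda>(n::nat) (k::nat). if k = n then (1::real) else 0)"
  have pe: "pval N p (e n) = (if n = 0 then 1 else if n \<le> N then p n else 0)" for n
    by (auto simp: pval_def e_def if_distrib sum.delta cong: if_cong)
  show pos: "\<forall>n\<in>{1..N}. 0 < p n"
  proof
    fix n assume n: "n \<in> {1..N}"
    show "0 < p n"
    proof (rule ccontr)
      assume "\<not> 0 < p n"
      let ?y = "\<lambda>k. x k + 1 * e n k"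
      have "?y \<in> cons_set N" by (rule cons_line[OF x]) (use n xp in \<open>auto simp: e_def\<close>)
      moreover have "pval N p ?y \<le> pval N p w"
        using pval_line[of N p x 1 "e n"] pe[of n] n \<open>\<not> 0 < p n\<close> xb by auto
      ultimately have "Util N \<beta> ui ?y \<le> Util N \<beta> ui x" using opt by (simp add: budget_def)
      moreover have "Util N \<beta> ui x < Util N \<beta> ui ?y"
        using util_strict[OF goods beta xp, of n 1] n by (simp add: e_def)
      ultimately show False by simp
    qed
  qed
  show bud: "pval N p x = pval N p w"
  proof (rule ccontr)
    assume "pval N p x \<noteq> pval N p w"
    then have s: "0 < pval N p w - pval N p x" using xb by simp
    let ?s = "pval N p w - pval N p x"
    let ?y = "\<lambda>k. x k + ?s * e 0 k"
    have "?y \<in> cons_set N" by (rule cons_line[OF x]) (use s xp in \<open>auto simp: e_def\<close>)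
    moreover have "pval N p ?y \<le> pval N p w"
      using pval_line[of N p x ?s "e 0"] pe[of 0] by auto
    ultimately have "Util N \<beta> ui ?y \<le> Util N \<beta> ui x" using opt by (simp add: budget_def)
    moreover have "Util N \<beta> ui x < Util N \<beta> ui ?y"
      using util_strict[OF goods beta xp, of 0 ?s] s by (simp add: e_def)
    ultimately show False by simp
  qed
  show "\<forall>n\<in>{1..N}. \<beta>^n * u1i n (x n) = u1i 0 (x 0) * p n"
  proof
    fix n assume n: "n \<in> {1..N}"
    have pn: "0 < p n" using pos n by blast
    define c where "c = (\<lambda>k. e n k - p n * e 0 k)"
    have "pval N p c = pval N p (e n) - p n * pval N p (e 0)"
      using pval_line[of N p "e n" "- p n" "e 0"] by (simp add: c_def)
    then have pc: "pval N p c = 0" using n pe[of n] pe[of 0] by simp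
    have dd: "((\<lambda>s. Util N \<beta> ui (\<lambda>k. x k + s * c k)) has_real_derivative
           (\<Sum>k=0..N. \<beta>^k * (u1i k (x k) * c k))) (at 0)"
      by (rule deriv_line[OF goods xp])
    have "(\<Sum>k=0..N. \<beta>^k * (u1i k (x k) * c k)) = 0"
    proof (rule DERIV_local_max[OF dd])
      show "0 < min (x n) (x 0 / p n)" using xp pn n by auto
      show "\<forall>y. \<bar>0 - y\<bar> < min (x n) (x 0 / p n) \<longrightarrow>
          Util N \<beta> ui (\<lambda>k. x k + y * c k) \<le> Util N \<beta> ui (\<lambda>k. x k + 0 * c k)"
      proof (intro allI impI)
        fix s assume s: "\<bar>0 - s\<bar> < min (x n) (x 0 / p n)"
        have "(\<lambda>k. x k + s * c k) \<in> cons_set N"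
        proof (rule cons_line[OF x])
          show "\<forall>k>N. c k = 0" using n by (auto simp: c_def e_def)
          show "\<forall>k\<le>N. 0 < x k + s * c k"
          proof (intro allI impI)
            fix k assume k: "k \<le> N"
            have "\<bar>s * p n\<bar> < x 0" using s pn by (simp add: abs_mult field_simps)
            then show "0 < x k + s * c k" using n k xp s by (auto simp: c_def e_def)
          qed
        qed
        moreover have "pval N p (\<lambda>k. x k + s * c k) \<le> pval N p w"
          using pval_line[of N p x s c] pc xb by simp
        ultimately show "Util N \<beta> ui (\<lambda>k. x k + s * c k) \<le> Util N \<beta> ui (\<lambda>k. x k + 0 * c k)"
          using opt by (simp add: budget_def)
      qed
    qed
    moreover have "(\<Sum>k=0..N. \<beta>^k * (u1i k (x k) * c k)) = \<beta>^n * u1i n (x n) - u1i 0 (x 0) * p n"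
    proof -
      have "(\<Sum>k=1..N. \<beta>^k * (u1i k (x k) * c k)) = (\<Sum>k=1..N. if k = n then \<beta>^k * u1i k (x k) else 0)"
        by (rule sum.cong) (auto simp: c_def e_def)
      also have "\<dots> = \<beta>^n * u1i n (x n)" using n by (simp add: sum.delta)
      finally show ?thesis using n by (simp add: sum_split0 c_def e_def)
    qed
    ultimately show "\<beta>^n * u1i n (x n) = u1i 0 (x 0) * p n" by simp
  qed
qed

lemma dist_pair_le: "dist (a::real, t::real) (c, d) \<le> \<bar>a - c\<bar> + \<bar>t - d\<bar>"
  by (simp add: dist_Pair_Pair dist_real_def sqrt_sum_squares_le_sum_abs)

lemma demand_deriv:
  fixes ui u1i u2i :: "nat \<Rightarrow> real \<Rightarrow> real" and w x p r :: "nat \<Rightarrow> real" and \<beta> :: real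
  assumes goods: "\<forall>n\<le>N. good (ui n) (u1i n) (u2i n)" and beta: "0 < \<beta>"
  and m: "m \<in> {1..N}" and ppos: "\<forall>n\<in>{1..N}. 0 < p n" and x: "x \<in> cons_set N"
  and bud: "pval N p x = pval N p w"
  and foc: "\<forall>n\<in>{1..N}. \<beta>^n * u1i n (x n) = u1i 0 (x 0) * p n"
  and n: "n \<in> {1..N}"
  and rdef: "r = (\<lambda>k. u1i k (x k) / - u2i k (x k))"
  shows "((\<lambda>t. demand N \<beta> ui w (p(m := t)) n) has_real_derivative
     (- r n * ((x m - w m - r m) / (r 0 + (\<Sum>k=1..N. p k * r k)) + (if n = m then 1 / p n else 0)))) (at (p m))"
proof -
  define L0 where "L0 = u1i 0 (x 0)"
  have xp: "\<And>k. k \<le> N \<Longrightarrow> 0 < x k" using x by (simp add: cons_set_def)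
  have gk: "\<And>k. k \<le> N \<Longrightarrow> good (ui k) (u1i k) (u2i k)" using goods by blast
  have L0: "0 < L0" unfolding L0_def using good_pos[OF gk xp] by simp
  have mN: "m \<le> N" "m \<noteq> 0" using m by auto
  have pm: "0 < p m" using ppos m by blast
  define h where "h = (\<lambda>k. hinv (u1i k))"
  define Rg where "Rg = (\<lambda>k. u1i k ` {0<..})"
  define Y where "Y = (\<lambda>a t k. a * (if k = 0 then 1 else if k = m then t else p k) / \<beta>^k)"
  define X where "X = (\<lambda>a t k. if k \<le> N then h k (Y a t k) else 0)"
  define G where "G = (\<lambda>a t. pval N (p(m:=t)) (X a t) - pval N (p(m:=t)) w)"
  have Rg_pos: "\<And>k y. k \<le> N \<Longrightarrow> y \<in> Rg k \<Longrightarrow> 0 < y"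
    unfolding Rg_def using good_pos[OF gk] by blast
  have h_pos: "\<And>k y. k \<le> N \<Longrightarrow> y \<in> Rg k \<Longrightarrow> 0 < h k y"
    unfolding Rg_def h_def using good_f1_h[OF gk] by blast
  have u1_h: "\<And>k y. k \<le> N \<Longrightarrow> y \<in> Rg k \<Longrightarrow> u1i k (h k y) = y"
    unfolding Rg_def h_def using good_f1_h[OF gk] by blast
  have Ybar: "Y L0 (p m) k = u1i k (x k)" if "k \<le> N" for k
  proof (cases "k = 0")
    case True then show ?thesis by (simp add: Y_def L0_def)
  next
    case False
    then have "k \<in> {1..N}" using that by auto
    then have "\<beta>^k * u1i k (x k) = L0 * p k" using foc L0_def by simp
    then show ?thesis using False beta by (simp add: Y_def field_simps)
  qed
  have Xbar: "X L0 (p m) = x"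
  proof
    fix k show "X L0 (p m) k = x k"
    proof (cases "k \<le> N")
      case True then show ?thesis
        using Ybar good_h_f1[OF gk xp] by (simp add: X_def h_def)
    next
      case False then show ?thesis using x by (simp add: X_def cons_set_def)
    qed
  qed
  have G0: "G L0 (p m) = 0" using bud Xbar by (simp add: G_def)
  have Gu: "G a t = h 0 a + (\<Sum>k=1..N. (if k = m then t else p k) * h k (Y a t k))
       - (w 0 + (\<Sum>k=1..N. (if k = m then t else p k) * w k))" for a t
    unfolding G_def pval_def
    by (auto simp: X_def Y_def intro!: sum.cong)
  define Om where "Om = {z::real\<times>real. 0 < snd z} \<inter> (\<Inter>k\<in>{..N}. (\<lambda>z. Y (fst z) (snd z) k) -` Rg k)"
  have YC: "continuous (at z) (\<lambda>z. Y (fst z) (snd z) k)" for z k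
    using beta by (cases "k = 0"; cases "k = m") (auto simp: Y_def intro!: continuous_intros)
  have o1: "open {z::real\<times>real. 0 < snd z}" by (intro open_Collect_less continuous_intros)
  have o2: "open ((\<lambda>z. Y (fst z) (snd z) k) -` Rg k)" if "k \<in> {..N}" for k
    using continuous_open_vimage[OF good_open[OF gk] YC] that Rg_def by auto
  have "open Om" unfolding Om_def
    by (intro open_Int o1 open_INT) (use o2 in auto)
  moreover have "(L0, p m) \<in> Om" unfolding Om_def Rg_def using pm Ybar xp by auto
  ultimately obtain \<rho> where rho: "0 < \<rho>" "ball (L0, p m) \<rho> \<subseteq> Om"
    by (meson openE)
  define \<delta> where "\<delta> = \<rho> / 2"
  have dpos: "0 < \<delta>" using rho by (simp add: \<delta>_def)
  have inOm: "0 < t \<and> (\<forall>k\<le>N. Y a t k \<in> Rg k)" if "\<bar>a - L0\<bar> \<le> \<delta>" "\<bar>t - p m\<bar> < \<delta>" for a t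
  proof -
    have "dist (L0, p m) (a, t) < \<rho>"
      using dist_pair_le[of a t L0 "p m"] that by (simp add: \<delta>_def dist_commute)
    then have "(a, t) \<in> Om" using rho by auto
    then show ?thesis by (auto simp: Om_def)
  qed
  have Pt: "0 < (if k = m then t else p k)" if "k \<in> {1..N}" "0 < t" for k t
    using that ppos by auto
  have mono: "G b t < G a t" if t: "\<bar>t - p m\<bar> < \<delta>" and ab: "L0 - \<delta> \<le> a" "a < b" "b \<le> L0 + \<delta>" for t a b
  proof -
    have ia: "0 < t \<and> (\<forall>k\<le>N. Y a t k \<in> Rg k)" using inOm[of a t] ab t by auto
    have ib: "\<forall>k\<le>N. Y b t k \<in> Rg k" using inOm[of b t] ab t by auto
    have Yl: "Y a t k < Y b t k" if "k \<le> N" for k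
    proof -
      have "0 < (if k = 0 then 1 else if k = m then t else p k) / \<beta>^k"
        using ia ppos that beta by auto
      then show ?thesis using ab unfolding Y_def
        by (metis mult_strict_right_mono times_divide_eq_right)
    qed
    have a0: "a \<in> Rg 0" using ia[THEN conjunct2, rule_format, of 0] by (simp add: Y_def)
    have b0: "b \<in> Rg 0" using ib[rule_format, of 0] by (simp add: Y_def)
    have "h 0 b < h 0 a"
      using good_h_dec[OF gk[of 0], of a b] a0 b0 ab by (simp add: h_def Rg_def)
    moreover have "(\<Sum>k=1..N. (if k = m then t else p k) * h k (Y b t k)) \<le> (\<Sum>k=1..N. (if k = m then t else p k) * h k (Y a t k))"
    proof (rule sum_mono)
      fix k assume k: "k \<in> {1..N}"
      have "h k (Y b t k) < h k (Y a t k)"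
        using good_h_dec[OF gk[of k], of "Y a t k" "Y b t k"] ia ib Yl[of k] k by (simp add: h_def Rg_def)
      then show "(if k = m then t else p k) * h k (Y b t k) \<le> (if k = m then t else p k) * h k (Y a t k)"
        using Pt[OF k] ia by (simp add: less_imp_le)
    qed
    ultimately show ?thesis unfolding Gu by (simp add: Y_def)
  qed
  have hc: "isCont (h k) y" if "k \<le> N" "y \<in> Rg k" for k y
    using good_h_cont[OF gk[OF that(1)]] that by (simp add: h_def Rg_def)
  have contl: "continuous_on {L0-\<delta>..L0+\<delta>} (\<lambda>a. G a t)" if t: "\<bar>t - p m\<bar> < \<delta>" for t
  proof (rule continuous_at_imp_continuous_on, rule ballI)
    fix a assume "a \<in> {L0-\<delta>..L0+\<delta>}"
    then have ia: "\<forall>k\<le>N. Y a t k \<in> Rg k" using inOm[of a t] t by auto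
    have c1: "isCont (\<lambda>a. h k (Y a t k)) a" if "k \<le> N" for k
    proof (rule isCont_o2[where f="\<lambda>a. Y a t k"])
      show "isCont (\<lambda>a. Y a t k) a" using beta by (auto simp: Y_def intro!: continuous_intros)
      show "isCont (h k) (Y a t k)" using hc that ia by blast
    qed
    have c0: "isCont (\<lambda>a. h 0 a) a" using c1[of 0] by (simp add: Y_def)
    show "isCont (\<lambda>a. G a t) a" unfolding Gu
      by (intro continuous_intros c0 c1) auto
  qed
  have contt: "isCont (G a) (p m)" if a: "L0 - \<delta> \<le> a" "a \<le> L0 + \<delta>" for a
  proof -
    have ia: "\<forall>k\<le>N. Y a (p m) k \<in> Rg k" using inOm[of a "p m"] a dpos by auto
    have c1: "isCont (\<lambda>t. h k (Y a t k)) (p m)" if "k \<le> N" for k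
    proof (rule isCont_o2[where f="\<lambda>t. Y a t k"])
      show "isCont (\<lambda>t. Y a t k) (p m)" using YC[of "(a, p m)" k]
        using beta by (cases "k = 0"; cases "k = m") (auto simp: Y_def intro!: continuous_intros)
      show "isCont (h k) (Y a (p m) k)" using hc that ia by blast
    qed
    have PC: "isCont (\<lambda>t. if k = m then t else p k) (p m)" for k
      by (cases "k = m") auto
    have "isCont (\<lambda>t. G a t) (p m)" unfolding Gu
      by (intro continuous_intros c1 PC) auto
    then show ?thesis by simp
  qed
  define l where "l = (\<lambda>t. THE a. \<bar>a - L0\<bar> < \<delta> \<and> G a t = 0)"
  have RF: "l (p m) = L0" "isCont l (p m)" "\<forall>\<^sub>F t in nhds (p m). \<bar>l t - L0\<bar> < \<delta> \<and> G (l t) t = 0"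
    using root_family[OF dpos dpos mono contl contt G0 l_def] by blast+
  define c where "c = (\<lambda>k::nat. 1 / \<beta>^k)"
  define Gs where "Gs = (\<lambda>a t. h 0 a + t * h m (a * t * c m)
      + (\<Sum>k\<in>{1..N}-{m}. p k * h k (a * (p k * c k)))
      - (w 0 + t * w m + (\<Sum>k\<in>{1..N}-{m}. p k * w k)))"
  have Gs_eq: "G a t = Gs a t" for a t
  proof -
    have s1: "(\<Sum>k=1..N. (if k = m then t else p k) * h k (Y a t k))
        = t * h m (a * t * c m) + (\<Sum>k\<in>{1..N}-{m}. p k * h k (a * (p k * c k)))"
      by (subst sum.remove[OF _ m]) (auto simp: Y_def c_def mN intro!: sum.cong)
    have s2: "(\<Sum>k=1..N. (if k = m then t else p k) * w k) = t * w m + (\<Sum>k\<in>{1..N}-{m}. p k * w k)"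
      by (subst sum.remove[OF _ m]) (auto intro!: sum.cong)
    show ?thesis unfolding Gu Gs_def s1 s2 by simp
  qed
  define H where "H = (\<lambda>k. inverse (u2i k (x k)))"
  have hd: "(h k has_real_derivative H k) (at (u1i k (x k)))" if "k \<le> N" for k
    unfolding h_def H_def using good_h_deriv[OF gk[OF that] xp[OF that]] .
  have pt_m: "L0 * p m * c m = u1i m (x m)" using Ybar[of m] mN by (simp add: Y_def c_def)
  have pt_k: "L0 * (p k * c k) = u1i k (x k)" if "k \<in> {1..N}" "k \<noteq> m" for k
    using Ybar[of k] that by (simp add: Y_def c_def)
  define z0 where "z0 = (L0, p m)"
  have dfst: "(fst has_derivative fst) (at z0)" by (rule bounded_linear_imp_has_derivative[OF bounded_linear_fst])
  have dsnd: "(snd has_derivative snd) (at z0)" by (rule bounded_linear_imp_has_derivative[OF bounded_linear_snd])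
  have d0: "((\<lambda>z. h 0 (fst z)) has_derivative (\<lambda>v. fst v * H 0)) (at z0)"
    by (rule DERIV_compose_FDERIV[OF _ dfst]) (use hd[of 0] in \<open>simp add: z0_def L0_def\<close>)
  have dm_in: "((\<lambda>z. fst z * snd z * c m) has_derivative (\<lambda>v. (L0 * snd v + fst v * p m) * c m)) (at z0)"
    using has_derivative_mult_left[OF has_derivative_mult[OF dfst dsnd], of "c m"] by (simp add: z0_def)
  have dm_h: "((\<lambda>z. h m (fst z * snd z * c m)) has_derivative (\<lambda>v. (L0 * snd v + fst v * p m) * c m * H m)) (at z0)"
    by (rule DERIV_compose_FDERIV[OF _ dm_in]) (use hd[of m] mN pt_m in \<open>simp add: z0_def\<close>)
  have hxm: "h m (L0 * p m * c m) = x m" using pt_m good_h_f1[OF gk xp] mN by (simp add: h_def)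
  have dm: "((\<lambda>z. snd z * h m (fst z * snd z * c m)) has_derivative
      (\<lambda>v. p m * ((L0 * snd v + fst v * p m) * c m * H m) + snd v * x m)) (at z0)"
    using has_derivative_mult[OF dsnd dm_h] hxm by (simp add: z0_def)
  have dk: "((\<lambda>z. p k * h k (fst z * (p k * c k))) has_derivative (\<lambda>v. p k * (fst v * (p k * c k) * H k))) (at z0)"
    if "k \<in> {1..N}-{m}" for k
  proof -
    have "((\<lambda>z. h k (fst z * (p k * c k))) has_derivative (\<lambda>v. fst v * (p k * c k) * H k)) (at z0)"
      by (rule DERIV_compose_FDERIV[OF _ has_derivative_mult_left[OF dfst]])
         (use hd[of k] pt_k[of k] that in \<open>simp add: z0_def\<close>)
    then show ?thesis by (rule has_derivative_mult_right)
  qed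
  have dsum: "((\<lambda>z. \<Sum>k\<in>{1..N}-{m}. p k * h k (fst z * (p k * c k))) has_derivative
       (\<lambda>v. \<Sum>k\<in>{1..N}-{m}. p k * (fst v * (p k * c k) * H k))) (at z0)"
    by (rule has_derivative_sum) (use dk in blast)
  have dconst: "((\<lambda>z. w 0 + snd z * w m + (\<Sum>k\<in>{1..N}-{m}. p k * w k)) has_derivative (\<lambda>v. snd v * w m)) (at z0)"
    using has_derivative_add[OF has_derivative_add[OF has_derivative_const has_derivative_mult_left[OF dsnd]] has_derivative_const]
    by simp
  define A1 where "A1 = H 0 + p m * (p m * c m * H m) + (\<Sum>k\<in>{1..N}-{m}. p k * (p k * c k * H k))"
  define B1 where "B1 = p m * (L0 * c m * H m) + x m - w m"
  have dG: "((\<lambda>z. Gs (fst z) (snd z)) has_derivative (\<lambda>v. A1 * fst v + B1 * snd v)) (at z0)"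
  proof (rule has_derivative_eq_rhs)
    show "((\<lambda>z. Gs (fst z) (snd z)) has_derivative
      (\<lambda>v. fst v * H 0 + (p m * ((L0 * snd v + fst v * p m) * c m * H m) + snd v * x m)
         + (\<Sum>k\<in>{1..N}-{m}. p k * (fst v * (p k * c k) * H k)) - snd v * w m)) (at z0)"
      unfolding Gs_def
      by (intro has_derivative_diff has_derivative_add d0 dm dsum dconst)
    show "(\<lambda>v. fst v * H 0 + (p m * ((L0 * snd v + fst v * p m) * c m * H m) + snd v * x m)
         + (\<Sum>k\<in>{1..N}-{m}. p k * (fst v * (p k * c k) * H k)) - snd v * w m) = (\<lambda>v. A1 * fst v + B1 * snd v)"
    proof
      fix v :: "real \<times> real"
      have "(\<Sum>k\<in>{1..N}-{m}. p k * (fst v * (p k * c k) * H k)) = fst v * (\<Sum>k\<in>{1..N}-{m}. p k * (p k * c k * H k))"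
        by (simp add: sum_distrib_left algebra_simps)
      then show "fst v * H 0 + (p m * ((L0 * snd v + fst v * p m) * c m * H m) + snd v * x m)
         + (\<Sum>k\<in>{1..N}-{m}. p k * (fst v * (p k * c k) * H k)) - snd v * w m = A1 * fst v + B1 * snd v"
        unfolding A1_def B1_def by (simp add: algebra_simps)
    qed
  qed
  have rpos: "0 < r k" if "k \<le> N" for k
    using good_pos[OF gk[OF that] xp[OF that]] good_neg[OF gk[OF that] xp[OF that]] by (simp add: rdef divide_pos_neg)
  define S where "S = (\<Sum>k=1..N. p k * r k)"
  have S: "0 \<le> S" unfolding S_def using rpos ppos by (intro sum_nonneg) (simp add: less_imp_le)
  have u2ne: "u2i k (x k) \<noteq> 0" if "k \<le> N" for k using good_neg[OF gk[OF that] xp[OF that]] by simp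
  have EK: "p k * c k * H k = - r k / L0" if "k \<in> {1..N}" for k
  proof -
    have kN: "k \<le> N" using that by simp
    have "\<beta>^k * u1i k (x k) = L0 * p k" using foc that L0_def by simp
    then show ?thesis using u2ne[OF kN] beta L0 by (simp add: c_def H_def rdef field_simps)
  qed
  have E0: "H 0 = - r 0 / L0" using u2ne[of 0] L0 by (simp add: H_def rdef L0_def field_simps)
  have A1eq: "A1 = - (r 0 + S) / L0"
  proof -
    have "(\<Sum>k\<in>{1..N}-{m}. p k * (p k * c k * H k)) = (\<Sum>k\<in>{1..N}-{m}. - (p k * r k) / L0)"
      by (rule sum.cong) (auto simp: EK)
    moreover have "S = p m * r m + (\<Sum>k\<in>{1..N}-{m}. p k * r k)"
      unfolding S_def by (subst sum.remove[OF _ m]) auto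
    moreover note SS = calculation(2)
    ultimately have "A1 = - r 0 / L0 + p m * (- r m / L0) + (\<Sum>k\<in>{1..N}-{m}. - (p k * r k) / L0)"
      unfolding A1_def E0 EK[OF m] by simp
    also have "\<dots> = - (r 0 + (p m * r m + (\<Sum>k\<in>{1..N}-{m}. p k * r k))) / L0"
    proof -
      have T: "(\<Sum>k\<in>{1..N}-{m}. - (p k * r k) / L0) = - (\<Sum>k\<in>{1..N}-{m}. p k * r k) / L0"
        by (simp add: sum_divide_distrib sum_negf)
      show ?thesis unfolding T using L0 by (simp add: field_simps)
    qed
    finally show ?thesis using SS by simp
  qed
  have B1eq: "B1 = x m - w m - r m"
    using EK[OF m] L0 by (simp add: B1_def field_simps)
  have A1ne: "A1 \<noteq> 0" using A1eq L0 rpos[of 0] S by simp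
  \<comment> \<open>derivative of the multiplier\<close>
  have Gs0: "Gs L0 (p m) = 0" using G0 Gs_eq by simp
  have evGs: "\<forall>\<^sub>F t in nhds (p m). Gs (l t) t = 0" using RF(3) by (auto simp: Gs_eq elim: eventually_mono)
  have ld: "(l has_real_derivative (- B1 / A1)) (at (p m))"
    by (rule ift1[OF _ A1ne Gs0 RF(2) RF(1) evGs]) (use dG in \<open>simp add: z0_def\<close>)
  have evt: "\<forall>\<^sub>F t in nhds (p m). \<bar>t - p m\<bar> < \<delta>"
    using eventually_nhds_metric[of _ "p m"] dpos by (auto simp: dist_real_def intro!: exI[of _ \<delta>])
  have evd: "\<forall>\<^sub>F t in nhds (p m). demand N \<beta> ui w (p(m := t)) n = h n (Y (l t) t n)"
    using RF(3) evt
  proof eventually_elim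
    case (elim t)
    have io: "0 < t \<and> (\<forall>k\<le>N. Y (l t) t k \<in> Rg k)" using inOm[of "l t" t] elim by auto
    have "Y (l t) t 0 \<in> Rg 0" using io by blast
    then have lR: "l t \<in> Rg 0" by (simp add: Y_def)
    then have lpos: "0 < l t" using Rg_pos[of 0 "l t"] by simp
    have "demand N \<beta> ui w (p(m := t)) = X (l t) t"
    proof (rule demand_char[OF goods beta])
      show "X (l t) t \<in> cons_set N" using io h_pos by (auto simp: cons_set_def X_def)
      show "pval N (p(m := t)) (X (l t) t) = pval N (p(m := t)) w" using elim by (simp add: G_def)
      show "0 < l t" by fact
      show "u1i 0 (X (l t) t 0) = l t" using u1_h[of 0 "l t"] lR by (simp add: X_def Y_def)
      show "\<forall>k\<in>{1..N}. \<beta>^k * u1i k (X (l t) t k) = l t * (p(m := t)) k"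
      proof
        fix k assume k: "k \<in> {1..N}"
        then have "u1i k (X (l t) t k) = Y (l t) t k" using u1_h[of k "Y (l t) t k"] io by (simp add: X_def)
        then show "\<beta>^k * u1i k (X (l t) t k) = l t * (p(m := t)) k" using k beta by (simp add: Y_def)
      qed
    qed
    then show ?case using n by (simp add: X_def)
  qed
  define l' where "l' = - B1 / A1"
  have l'eq: "l' = L0 * (x m - w m - r m) / (r 0 + S)"
    using L0 rpos[of 0] S by (simp add: l'_def A1eq B1eq field_simps)
  have nN: "n \<le> N" "n \<noteq> 0" using n by auto
  have inner: "((\<lambda>t. Y (l t) t n) has_real_derivative (l' * p n + (if n = m then L0 else 0)) / \<beta>^n) (at (p m))"
  proof (cases "n = m")
    case True
    have "((\<lambda>t. l t * t / \<beta>^n) has_real_derivative (l' * p m + 1 * l (p m)) / \<beta>^n) (at (p m))"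
      by (intro DERIV_cdivide DERIV_mult ld[folded l'_def] DERIV_ident)
    then show ?thesis using True nN RF(1) by (simp add: Y_def)
  next
    case False
    have "((\<lambda>t. l t * p n / \<beta>^n) has_real_derivative (l' * p n) / \<beta>^n) (at (p m))"
      by (intro DERIV_cdivide DERIV_cmult_right ld[folded l'_def])
    then show ?thesis using False nN by (simp add: Y_def)
  qed
  have Yn0: "Y (l (p m)) (p m) n = u1i n (x n)" using Ybar[OF nN(1)] RF(1) by simp
  have outer: "((\<lambda>t. h n (Y (l t) t n)) has_real_derivative H n * ((l' * p n + (if n = m then L0 else 0)) / \<beta>^n)) (at (p m))"
    using DERIV_chain2[OF hd[OF nN(1), folded Yn0] inner] .
  have val: "H n * ((l' * p n + (if n = m then L0 else 0)) / \<beta>^n)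
      = - r n * ((x m - w m - r m) / (r 0 + (\<Sum>k=1..N. p k * r k)) + (if n = m then 1 / p n else 0))"
  proof -
    have pn: "0 < p n" using ppos n by blast
    have "H n * ((l' * p n + (if n = m then L0 else 0)) / \<beta>^n) = (p n * c n * H n) * (l' + (if n = m then L0 / p n else 0))"
      using pn pm beta by (cases "n = m") (simp_all add: c_def field_simps)
    also have "\<dots> = - r n / L0 * (l' + (if n = m then L0 / p n else 0))" using EK[OF n] by simp
    also have "\<dots> = - r n * ((x m - w m - r m) / (r 0 + S) + (if n = m then 1 / p n else 0))"
    proof -
      define q where "q = (x m - w m - r m) / (r 0 + S)"
      have "l' = L0 * q" unfolding l'eq q_def by simp
      then have "l' + (if n = m then L0 / p n else 0) = L0 * (q + (if n = m then 1 / p n else 0))"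
        by (simp add: distrib_left)
      then show ?thesis using L0 unfolding q_def[symmetric] by simp
    qed
    finally show ?thesis by (simp add: S_def)
  qed
  show ?thesis
    using DERIV_cong_ev[OF refl evd refl] outer val by simp
qed

lemma agent_quad:
  fixes r p x w v :: "nat \<Rightarrow> real" and \<alpha> rS rt :: real and N :: nat
  assumes ppos: "\<forall>n\<in>{1..N}. 0 < p n"
  and rS: "rS = (\<Sum>n=1..N. p n * r n)" "rS \<noteq> 0"
  and rt: "rt = r 0 + rS" "rt \<noteq> 0"
  and bud: "(\<Sum>m=1..N. p m * (x m - w m)) = w 0 - x 0"
  shows "(\<Sum>m=1..N. \<Sum>n=1..N. (\<alpha> * p m + v m) * (- r n * ((x m - w m - r m) / rt + (if n = m then 1 / p n else 0))) * (\<alpha> * p n + v n))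
    = - (rS / rt * (r 0 + w 0 - x 0)) * \<alpha>^2
      + (r 0 / rt * (\<Sum>m=1..N. (x m - w m) * v m)
         - (2 * r 0 + w 0 - x 0) / rt * rS * ((\<Sum>n=1..N. r n * v n) / rS)
         - (\<Sum>m=1..N. (x m - w m) * v m)) * \<alpha>
      - (\<Sum>n=1..N. r n / p n * (v n - p n * ((\<Sum>k=1..N. r k * v k) / rS))^2)
      + rS / rt * ((\<Sum>k=1..N. r k * v k) / rS) * ((\<Sum>m=1..N. (w m - x m) * v m) - r 0 * ((\<Sum>k=1..N. r k * v k) / rS))"
proof -
  define q where "q = (\<lambda>n. \<alpha> * p n + v n)"
  define mu where "mu = (\<lambda>m. (x m - w m - r m) / rt)"
  define L where "L = (\<Sum>k=1..N. r k * v k) / rS"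
  define b where "b = (\<Sum>m=1..N. (x m - w m) * v m)"
  define T where "T = (\<Sum>n=1..N. r n * v n ^ 2 / p n)"
  define s1 where "s1 = (\<Sum>n=1..N. r n * q n)"
  have rv: "(\<Sum>k=1..N. r k * v k) = rS * L" using rS by (simp add: L_def)
  have inner: "(\<Sum>n=1..N. q m * (- r n * (mu m + (if n = m then 1 / p n else 0))) * q n)
      = - (q m * mu m) * s1 - r m * q m ^ 2 / p m" if m: "m \<in> {1..N}" for m
  proof -
    have "(\<Sum>n=1..N. q m * (- r n * (mu m + (if n = m then 1 / p n else 0))) * q n)
       = (\<Sum>n=1..N. - (q m * mu m) * (r n * q n) - (if n = m then r n * q n * q n / p n else 0))"
      by (rule sum.cong) (auto simp: algebra_simps)
    also have "\<dots> = - (q m * mu m) * s1 - r m * q m ^ 2 / p m"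
      using m by (simp add: sum_subtractf sum_negf sum_distrib_left s1_def power2_eq_square mult.assoc)
    finally show ?thesis .
  qed
  have LHS: "(\<Sum>m=1..N. \<Sum>n=1..N. q m * (- r n * (mu m + (if n = m then 1 / p n else 0))) * q n)
      = - s1 * (\<Sum>m=1..N. q m * mu m) - (\<Sum>m=1..N. r m * q m ^ 2 / p m)"
  proof -
    have "(\<Sum>m=1..N. \<Sum>n=1..N. q m * (- r n * (mu m + (if n = m then 1 / p n else 0))) * q n)
       = (\<Sum>m=1..N. - (q m * mu m) * s1 - r m * q m ^ 2 / p m)"
      by (rule sum.cong[OF refl]) (rule inner)
    also have "\<dots> = - s1 * (\<Sum>m=1..N. q m * mu m) - (\<Sum>m=1..N. r m * q m ^ 2 / p m)"
      by (simp add: sum_subtractf sum_negf sum_distrib_left sum_distrib_right mult.commute)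
    finally show ?thesis .
  qed
  have s1v: "s1 = \<alpha> * rS + rS * L"
    unfolding s1_def q_def using rv rS(1) by (simp add: algebra_simps sum.distrib sum_distrib_left)
  have s2: "(\<Sum>m=1..N. q m * (x m - w m)) = \<alpha> * (w 0 - x 0) + b"
  proof -
    have "(\<Sum>m=1..N. q m * (x m - w m)) = (\<Sum>m=1..N. \<alpha> * (p m * (x m - w m)) + (x m - w m) * v m)"
      by (rule sum.cong) (simp_all add: q_def algebra_simps)
    also have "\<dots> = \<alpha> * (\<Sum>m=1..N. p m * (x m - w m)) + b"
      by (simp add: sum.distrib sum_distrib_left b_def)
    finally have "(\<Sum>m=1..N. q m * (x m - w m)) = \<alpha> * (\<Sum>m=1..N. p m * (x m - w m)) + b" .
    then show ?thesis using bud by simp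
  qed
  have s3: "(\<Sum>m=1..N. q m * mu m) = (\<alpha> * (w 0 - x 0) + b - s1) / rt"
  proof -
    have "(\<Sum>m=1..N. q m * mu m) = (\<Sum>m=1..N. q m * (x m - w m) - r m * q m) / rt"
      unfolding mu_def by (simp add: sum_divide_distrib algebra_simps)
    also have "\<dots> = (\<alpha> * (w 0 - x 0) + b - s1) / rt"
      using s2 by (simp add: sum_subtractf s1_def)
    finally show ?thesis .
  qed
  have s4: "(\<Sum>m=1..N. r m * q m ^ 2 / p m) = \<alpha>^2 * rS + 2 * \<alpha> * rS * L + T"
  proof -
    have "(\<Sum>m=1..N. r m * q m ^ 2 / p m) = (\<Sum>m=1..N. \<alpha>^2 * (p m * r m) + 2 * \<alpha> * (r m * v m) + r m * v m ^ 2 / p m)"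
    proof (rule sum.cong[OF refl])
      fix m assume "m \<in> {1..N}"
      then have "0 < p m" using ppos by blast
      then have "p m \<noteq> 0" by simp
      then show "r m * q m ^ 2 / p m = \<alpha>^2 * (p m * r m) + 2 * \<alpha> * (r m * v m) + r m * v m ^ 2 / p m"
        by (simp add: q_def field_simps power2_eq_square)
    qed
    then show ?thesis using rv rS(1) by (simp add: sum.distrib sum_distrib_left[symmetric] T_def)
  qed
  have Sv: "(\<Sum>n=1..N. r n / p n * (v n - p n * L)^2) = T - rS * L^2"
  proof -
    have "(\<Sum>n=1..N. r n / p n * (v n - p n * L)^2) = (\<Sum>n=1..N. r n * v n ^ 2 / p n - 2 * L * (r n * v n) + L^2 * (p n * r n))"
    proof (rule sum.cong[OF refl])
      fix n assume "n \<in> {1..N}"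
      then have "0 < p n" using ppos by blast
      then have "p n \<noteq> 0" by simp
      then show "r n / p n * (v n - p n * L)^2 = r n * v n ^ 2 / p n - 2 * L * (r n * v n) + L^2 * (p n * r n)"
        by (simp add: field_simps power2_eq_square)
    qed
    then show ?thesis using rv rS(1) by (simp add: sum.distrib sum_subtractf sum_distrib_left[symmetric] T_def power2_eq_square)
  qed
  have wx: "(\<Sum>m=1..N. (w m - x m) * v m) = - b"
    unfolding b_def by (simp add: sum_negf[symmetric] algebra_simps)
  have main: "- s1 * ((\<alpha> * (w 0 - x 0) + b - s1) / rt) - (\<alpha>^2 * rS + 2 * \<alpha> * rS * L + T)
     = - (rS / rt * (r 0 + w 0 - x 0)) * \<alpha>^2
      + (r 0 / rt * b - (2 * r 0 + w 0 - x 0) / rt * rS * L - b) * \<alpha>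
      - (T - rS * L^2) + rS / rt * L * (- b - r 0 * L)"
  proof -
    have rSS: "r 0 = rt - rS" using rt(1) by simp
    show ?thesis unfolding s1v rSS using rt(2) by (simp add: field_simps power2_eq_square)
  qed
  have e3: "- (rS / rt * (r 0 + w 0 - x 0)) * \<alpha>^2
      + (r 0 / rt * (\<Sum>m=1..N. (x m - w m) * v m)
         - (2 * r 0 + w 0 - x 0) / rt * rS * ((\<Sum>n=1..N. r n * v n) / rS)
         - (\<Sum>m=1..N. (x m - w m) * v m)) * \<alpha>
      - (\<Sum>n=1..N. r n / p n * (v n - p n * ((\<Sum>k=1..N. r k * v k) / rS))^2)
      + rS / rt * ((\<Sum>k=1..N. r k * v k) / rS) * ((\<Sum>m=1..N. (w m - x m) * v m) - r 0 * ((\<Sum>k=1..N. r k * v k) / rS))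
    = - (rS / rt * (r 0 + w 0 - x 0)) * \<alpha>^2
      + (r 0 / rt * b - (2 * r 0 + w 0 - x 0) / rt * rS * L - b) * \<alpha>
      - (T - rS * L^2) + rS / rt * L * (- b - r 0 * L)"
    unfolding L_def[symmetric] b_def[symmetric] Sv wx by simp
  have "(\<Sum>m=1..N. \<Sum>n=1..N. (\<alpha> * p m + v m) * (- r n * ((x m - w m - r m) / rt + (if n = m then 1 / p n else 0))) * (\<alpha> * p n + v n))
      = (\<Sum>m=1..N. \<Sum>n=1..N. q m * (- r n * (mu m + (if n = m then 1 / p n else 0))) * q n)"
    by (simp add: q_def mu_def)
  also have "\<dots> = - s1 * (\<Sum>m=1..N. q m * mu m) - (\<Sum>m=1..N. r m * q m ^ 2 / p m)" by (rule LHS)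
  also have "\<dots> = - s1 * ((\<alpha> * (w 0 - x 0) + b - s1) / rt) - (\<alpha>^2 * rS + 2 * \<alpha> * rS * L + T)"
    by (simp only: s3 s4)
  also have "\<dots> = - (rS / rt * (r 0 + w 0 - x 0)) * \<alpha>^2
      + (r 0 / rt * b - (2 * r 0 + w 0 - x 0) / rt * rS * L - b) * \<alpha>
      - (T - rS * L^2) + rS / rt * L * (- b - r 0 * L)" by (rule main)
  finally show ?thesis unfolding e3 .
qed

lemma Psi_lin: "Psi I N pb u1 u2 \<omega> xb (\<lambda>n. a * f n + g n) = a * Psi I N pb u1 u2 \<omega> xb f + Psi I N pb u1 u2 \<omega> xb g"
proof -
  have L: "Lam N pb u1 u2 xb i (\<lambda>n. a * f n + g n) = a * Lam N pb u1 u2 xb i f + Lam N pb u1 u2 xb i g" for i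
    unfolding Lam_def by (simp add: algebra_simps sum.distrib sum_distrib_left add_divide_distrib)
  define C where "C i = (2 * rbar u1 u2 xb i 0 + \<omega> i 0 - xb i 0) / rbartot N pb u1 u2 xb i * rbar0 N pb u1 u2 xb i" for i
  have "Psi I N pb u1 u2 \<omega> xb (\<lambda>n. a * f n + g n) = (\<Sum>i\<in>I. a * (C i * Lam N pb u1 u2 xb i f) + C i * Lam N pb u1 u2 xb i g)"
    unfolding Psi_def L C_def[symmetric] by (rule sum.cong) (simp_all add: distrib_left mult.left_commute)
  also have "\<dots> = a * (\<Sum>i\<in>I. C i * Lam N pb u1 u2 xb i f) + (\<Sum>i\<in>I. C i * Lam N pb u1 u2 xb i g)"
    by (simp add: sum.distrib sum_distrib_left)
  finally show ?thesis unfolding Psi_def C_def[symmetric] .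
qed

lemma Psi_cong: assumes "\<forall>n\<in>{1..N}. f n = g n" shows "Psi I N pb u1 u2 \<omega> xb f = Psi I N pb u1 u2 \<omega> xb g"
proof -
  have "Lam N pb u1 u2 xb i f = Lam N pb u1 u2 xb i g" for i
  proof -
    have "(\<Sum>n=1..N. rbar u1 u2 xb i n * f n) = (\<Sum>n=1..N. rbar u1 u2 xb i n * g n)"
      by (rule sum.cong) (use assms in auto)
    then show ?thesis by (simp add: Lam_def)
  qed
  then show ?thesis by (simp add: Psi_def)
qed

theorem proposition1:
  fixes I :: "'a set" and N :: nat and \<beta> :: real
    and u u1 u2 :: "'a \<Rightarrow> nat \<Rightarrow> real \<Rightarrow> real" and \<omega> :: "'a \<Rightarrow> nat \<Rightarrow> real"
    and pb :: "nat \<Rightarrow> real" and xb :: "'a \<Rightarrow> nat \<Rightarrow> real"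
  assumes finI: "finite I" and N1: "1 \<le> N" and beta: "0 < \<beta>" "\<beta> < 1"
    and endow: "\<forall>i\<in>I. \<forall>n\<le>N. 0 \<le> \<omega> i n"
    and d1: "\<forall>i\<in>I. \<forall>n\<le>N. \<forall>x>0. (u i n has_real_derivative u1 i n x) (at x)"
    and d2: "\<forall>i\<in>I. \<forall>n\<le>N. \<forall>x>0. (u1 i n has_real_derivative u2 i n x) (at x)"
    and c2: "\<forall>i\<in>I. \<forall>n\<le>N. continuous_on {0<..} (u2 i n)"
    and u1_pos: "\<forall>i\<in>I. \<forall>n\<le>N. \<forall>x>0. 0 < u1 i n x"
    and u2_neg: "\<forall>i\<in>I. \<forall>n\<le>N. \<forall>x>0. u2 i n x < 0"
    and inada: "\<forall>i\<in>I. \<forall>n\<le>N. filterlim (u1 i n) at_top (at_right 0)"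
    and eq: "competitive_equilibrium N \<beta> I u \<omega> pb xb"
  shows "(\<exists>D. (\<forall>m\<in>{1..N}. \<forall>n\<in>{1..N}.
              ((\<lambda>t. excess_demand N \<beta> I u \<omega> (pb(m := t)) n) has_real_derivative D m n)
                (at (pb m))) \<and>
            (\<forall>\<alpha> v. Psi I N pb u1 u2 \<omega> xb v = 0 \<longrightarrow>
              (\<Sum>m=1..N. \<Sum>n=1..N. (\<alpha> * pb m + v m) * D m n * (\<alpha> * pb n + v n))
                = - Acoef I N pb u1 u2 \<omega> xb * \<alpha>^2 + Rfun I N pb u1 u2 \<omega> xb v * \<alpha>
                  - Sfun I N pb u1 u2 xb v + Mfun I N pb u1 u2 \<omega> xb v))
         \<and> (Acoef I N pb u1 u2 \<omega> xb > 0 \<longrightarrow> Psi I N pb u1 u2 \<omega> xb pb > 0 \<and>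
              (\<forall>q::nat \<Rightarrow> real. \<exists>!(\<alpha>, v). (\<forall>n. n \<notin> {1..N} \<longrightarrow> v n = 0) \<and>
                  Psi I N pb u1 u2 \<omega> xb v = 0 \<and> (\<forall>n\<in>{1..N}. q n = \<alpha> * pb n + v n)))"
proof -
  have goodall: "\<forall>n\<le>N. good (u i n) (u1 i n) (u2 i n)" if "i \<in> I" for i
    using d1 d2 u1_pos u2_neg that by (simp add: good_def)
  have dem: "is_demand N \<beta> (u i) (\<omega> i) pb (xb i)" if "i \<in> I" for i
    using eq that by (simp add: competitive_equilibrium_def)
  have clear: "\<forall>n\<le>N. (\<Sum>i\<in>I. xb i n) = (\<Sum>i\<in>I. \<omega> i n)"
    using eq by (simp add: competitive_equilibrium_def)
  have ppos: "\<forall>n\<in>{1..N}. 0 < pb n" if "i \<in> I" for i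
    using eq_props(1)[OF goodall[OF that] beta(1) dem[OF that]] .
  have bud: "pval N pb (xb i) = pval N pb (\<omega> i)" if "i \<in> I" for i
    using eq_props(2)[OF goodall[OF that] beta(1) dem[OF that]] .
  have foc: "\<forall>n\<in>{1..N}. \<beta>^n * u1 i n (xb i n) = u1 i 0 (xb i 0) * pb n" if "i \<in> I" for i
    using eq_props(3)[OF goodall[OF that] beta(1) dem[OF that]] .
  have xcons: "xb i \<in> cons_set N" if "i \<in> I" for i
    using dem[OF that] by (simp add: is_demand_def budget_def)
  have rtot: "rbartot N pb u1 u2 xb i = rbar u1 u2 xb i 0 + (\<Sum>k=1..N. pb k * rbar u1 u2 xb i k)" for i
    by (simp add: rbartot_def rbar0_def)
  have rpos: "0 < rbar u1 u2 xb i k" if "i \<in> I" "k \<le> N" for i k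
    using u1_pos u2_neg xcons[OF that(1)] that by (auto simp: rbar_def cons_set_def divide_pos_neg)
  have r0pos: "0 < rbar0 N pb u1 u2 xb i" if "i \<in> I" for i
  proof -
    have "0 < pb 1 * rbar u1 u2 xb i 1" using ppos[OF that] rpos[OF that, of 1] N1 by simp
    also have "\<dots> \<le> (\<Sum>k=1..N. pb k * rbar u1 u2 xb i k)"
      using ppos[OF that] rpos[OF that] N1
      by (intro member_le_sum) (auto intro!: mult_nonneg_nonneg less_imp_le)
    finally show ?thesis by (simp add: rbar0_def)
  qed
  have rtpos: "0 < rbartot N pb u1 u2 xb i" if "i \<in> I" for i
    using rpos[OF that, of 0] r0pos[OF that] by (simp add: rbartot_def)
  define D where "D = (\<lambda>m n. \<Sum>i\<in>I. - rbar u1 u2 xb i n * ((xb i m - \<omega> i m - rbar u1 u2 xb i m) / rbartot N pb u1 u2 xb i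
        + (if n = m then 1 / pb n else 0)))"
  have part1: "\<forall>m\<in>{1..N}. \<forall>n\<in>{1..N}.
      ((\<lambda>t. excess_demand N \<beta> I u \<omega> (pb(m := t)) n) has_real_derivative D m n) (at (pb m))"
  proof (intro ballI)
    fix m n assume m: "m \<in> {1..N}" and n: "n \<in> {1..N}"
    show "((\<lambda>t. excess_demand N \<beta> I u \<omega> (pb(m := t)) n) has_real_derivative D m n) (at (pb m))"
      unfolding excess_demand_def D_def
    proof (rule DERIV_sum)
      fix i assume i: "i \<in> I"
      have "((\<lambda>t. demand N \<beta> (u i) (\<omega> i) (pb(m := t)) n) has_real_derivative
         (- rbar u1 u2 xb i n * ((xb i m - \<omega> i m - rbar u1 u2 xb i m) / (rbar u1 u2 xb i 0 + (\<Sum>k=1..N. pb k * rbar u1 u2 xb i k))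
           + (if n = m then 1 / pb n else 0)))) (at (pb m))"
        by (rule demand_deriv[OF goodall[OF i] beta(1) m ppos[OF i] xcons[OF i] bud[OF i] foc[OF i] n])
           (simp add: rbar_def fun_eq_iff)
      from DERIV_diff[OF this DERIV_const[of "\<omega> i n"]]
      show "((\<lambda>t. demand N \<beta> (u i) (\<omega> i) (pb(m := t)) n - \<omega> i n) has_real_derivative
         - rbar u1 u2 xb i n * ((xb i m - \<omega> i m - rbar u1 u2 xb i m) / rbartot N pb u1 u2 xb i
        + (if n = m then 1 / pb n else 0))) (at (pb m))"
        by (simp add: rtot)
    qed
  qed
  define AA where "AA i = rbar0 N pb u1 u2 xb i / rbartot N pb u1 u2 xb i * (rbar u1 u2 xb i 0 + \<omega> i 0 - xb i 0)" for i
  define RR where "RR i v = rbar u1 u2 xb i 0 / rbartot N pb u1 u2 xb i * (\<Sum>m=1..N. (xb i m - \<omega> i m) * v m)" for i v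
  define PP where "PP i v = (2 * rbar u1 u2 xb i 0 + \<omega> i 0 - xb i 0) / rbartot N pb u1 u2 xb i
       * rbar0 N pb u1 u2 xb i * Lam N pb u1 u2 xb i v" for i v
  define BB where "BB i v = (\<Sum>m=1..N. (xb i m - \<omega> i m) * v m)" for i v
  define SS where "SS i v = (\<Sum>n=1..N. rbar u1 u2 xb i n / pb n * (v n - pb n * Lam N pb u1 u2 xb i v)^2)" for i v
  define MM where "MM i v = rbar0 N pb u1 u2 xb i / rbartot N pb u1 u2 xb i * Lam N pb u1 u2 xb i v
       * ((\<Sum>m=1..N. (\<omega> i m - xb i m) * v m) - rbar u1 u2 xb i 0 * Lam N pb u1 u2 xb i v)" for i v
  define QQ where "QQ i \<alpha> v = (\<Sum>m=1..N. \<Sum>n=1..N. (\<alpha> * pb m + v m) * (- rbar u1 u2 xb i n * ((xb i m - \<omega> i m - rbar u1 u2 xb i m)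
       / rbartot N pb u1 u2 xb i + (if n = m then 1 / pb n else 0))) * (\<alpha> * pb n + v n))" for i \<alpha> v
  have agent: "QQ i \<alpha> v = - AA i * \<alpha>^2 + (RR i v - PP i v - BB i v) * \<alpha> - SS i v + MM i v" if i: "i \<in> I" for i \<alpha> v
  proof -
    have bs: "(\<Sum>m=1..N. pb m * (xb i m - \<omega> i m)) = \<omega> i 0 - xb i 0"
      using bud[OF i] by (simp add: pval_def right_diff_distrib sum_subtractf)
    show ?thesis unfolding QQ_def AA_def RR_def PP_def BB_def SS_def MM_def Lam_def
      by (rule agent_quad[where r="rbar u1 u2 xb i" and p=pb and x="xb i" and w="\<omega> i" and v=v and \<alpha>=\<alpha>
            and rS="rbar0 N pb u1 u2 xb i" and rt="rbartot N pb u1 u2 xb i" and N=N])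
         (use ppos[OF i] r0pos[OF i] rtpos[OF i] bs in \<open>simp_all add: rbar0_def rbartot_def\<close>)
  qed
  have part2: "\<forall>\<alpha> v. Psi I N pb u1 u2 \<omega> xb v = 0 \<longrightarrow>
      (\<Sum>m=1..N. \<Sum>n=1..N. (\<alpha> * pb m + v m) * D m n * (\<alpha> * pb n + v n))
        = - Acoef I N pb u1 u2 \<omega> xb * \<alpha>^2 + Rfun I N pb u1 u2 \<omega> xb v * \<alpha>
          - Sfun I N pb u1 u2 xb v + Mfun I N pb u1 u2 \<omega> xb v"
  proof (intro allI impI)
    fix \<alpha> v assume Psi0: "Psi I N pb u1 u2 \<omega> xb v = 0"
    have "(\<Sum>m=1..N. \<Sum>n=1..N. (\<alpha> * pb m + v m) * D m n * (\<alpha> * pb n + v n))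
        = (\<Sum>m=1..N. \<Sum>n=1..N. \<Sum>i\<in>I. (\<alpha> * pb m + v m) * (- rbar u1 u2 xb i n * ((xb i m - \<omega> i m - rbar u1 u2 xb i m)
       / rbartot N pb u1 u2 xb i + (if n = m then 1 / pb n else 0))) * (\<alpha> * pb n + v n))"
      unfolding D_def by (simp add: sum_distrib_left sum_distrib_right)
    also have "\<dots> = (\<Sum>m=1..N. \<Sum>i\<in>I. \<Sum>n=1..N. (\<alpha> * pb m + v m) * (- rbar u1 u2 xb i n * ((xb i m - \<omega> i m - rbar u1 u2 xb i m)
       / rbartot N pb u1 u2 xb i + (if n = m then 1 / pb n else 0))) * (\<alpha> * pb n + v n))"
      by (rule sum.cong[OF refl], rule sum.swap)
    also have "\<dots> = (\<Sum>i\<in>I. QQ i \<alpha> v)"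
      unfolding QQ_def by (rule sum.swap)
    also have "\<dots> = (\<Sum>i\<in>I. - AA i * \<alpha>^2 + (RR i v - PP i v - BB i v) * \<alpha> - SS i v + MM i v)"
      by (rule sum.cong[OF refl]) (rule agent)
    also have "\<dots> = - (\<Sum>i\<in>I. AA i) * \<alpha>^2 + ((\<Sum>i\<in>I. RR i v) - (\<Sum>i\<in>I. PP i v) - (\<Sum>i\<in>I. BB i v)) * \<alpha>
        - (\<Sum>i\<in>I. SS i v) + (\<Sum>i\<in>I. MM i v)"
      by (simp add: sum.distrib sum_subtractf sum_negf flip: sum_distrib_right)
    also have "(\<Sum>i\<in>I. PP i v) = 0" using Psi0 by (simp add: PP_def Psi_def)
    also have "(\<Sum>i\<in>I. BB i v) = 0"
    proof -
      have "(\<Sum>i\<in>I. BB i v) = (\<Sum>m=1..N. ((\<Sum>i\<in>I. xb i m) - (\<Sum>i\<in>I. \<omega> i m)) * v m)"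
        unfolding BB_def by (subst sum.swap) (simp add: sum_distrib_right sum_subtractf left_diff_distrib)
      also have "\<dots> = 0" using clear by (intro sum.neutral) auto
      finally show ?thesis .
    qed
    finally show "(\<Sum>m=1..N. \<Sum>n=1..N. (\<alpha> * pb m + v m) * D m n * (\<alpha> * pb n + v n))
        = - Acoef I N pb u1 u2 \<omega> xb * \<alpha>^2 + Rfun I N pb u1 u2 \<omega> xb v * \<alpha>
          - Sfun I N pb u1 u2 xb v + Mfun I N pb u1 u2 \<omega> xb v"
      by (simp add: Acoef_def AA_def Rfun_def RR_def Sfun_def SS_def Mfun_def MM_def)
  qed
  have part3: "Acoef I N pb u1 u2 \<omega> xb > 0 \<longrightarrow> Psi I N pb u1 u2 \<omega> xb pb > 0 \<and>
      (\<forall>q::nat \<Rightarrow> real. \<exists>!(\<alpha>, v). (\<forall>n. n \<notin> {1..N} \<longrightarrow> v n = 0) \<and>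
          Psi I N pb u1 u2 \<omega> xb v = 0 \<and> (\<forall>n\<in>{1..N}. q n = \<alpha> * pb n + v n))"
  proof
    assume Apos: "Acoef I N pb u1 u2 \<omega> xb > 0"
    have Lam1: "Lam N pb u1 u2 xb i pb = 1" if i: "i \<in> I" for i
    proof -
      have "(\<Sum>n=1..N. rbar u1 u2 xb i n * pb n) = rbar0 N pb u1 u2 xb i"
        by (simp add: rbar0_def mult.commute)
      then show ?thesis using r0pos[OF i] by (simp add: Lam_def)
    qed
    have "Psi I N pb u1 u2 \<omega> xb pb = (\<Sum>i\<in>I. AA i + rbar u1 u2 xb i 0 * rbar0 N pb u1 u2 xb i / rbartot N pb u1 u2 xb i)"
      unfolding Psi_def
    proof (rule sum.cong[OF refl])
      fix i assume i: "i \<in> I"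
      show "(2 * rbar u1 u2 xb i 0 + \<omega> i 0 - xb i 0) / rbartot N pb u1 u2 xb i * rbar0 N pb u1 u2 xb i * Lam N pb u1 u2 xb i pb
          = AA i + rbar u1 u2 xb i 0 * rbar0 N pb u1 u2 xb i / rbartot N pb u1 u2 xb i"
        using Lam1[OF i] rtpos[OF i] by (simp add: AA_def field_simps)
    qed
    also have "\<dots> = Acoef I N pb u1 u2 \<omega> xb + (\<Sum>i\<in>I. rbar u1 u2 xb i 0 * rbar0 N pb u1 u2 xb i / rbartot N pb u1 u2 xb i)"
      by (simp add: sum.distrib Acoef_def AA_def)
    finally have Pe: "Psi I N pb u1 u2 \<omega> xb pb = Acoef I N pb u1 u2 \<omega> xb + (\<Sum>i\<in>I. rbar u1 u2 xb i 0 * rbar0 N pb u1 u2 xb i / rbartot N pb u1 u2 xb i)" .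
    have "0 \<le> (\<Sum>i\<in>I. rbar u1 u2 xb i 0 * rbar0 N pb u1 u2 xb i / rbartot N pb u1 u2 xb i)"
      using rpos r0pos rtpos by (intro sum_nonneg) (simp add: less_imp_le)
    then have Ppos: "0 < Psi I N pb u1 u2 \<omega> xb pb" using Pe Apos by simp
    show "Psi I N pb u1 u2 \<omega> xb pb > 0 \<and>
      (\<forall>q::nat \<Rightarrow> real. \<exists>!(\<alpha>, v). (\<forall>n. n \<notin> {1..N} \<longrightarrow> v n = 0) \<and>
          Psi I N pb u1 u2 \<omega> xb v = 0 \<and> (\<forall>n\<in>{1..N}. q n = \<alpha> * pb n + v n))"
    proof (intro conjI allI Ppos)
      fix q :: "nat \<Rightarrow> real"
      let ?P = "Psi I N pb u1 u2 \<omega> xb"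
      define a0 where "a0 = ?P q / ?P pb"
      define v0 where "v0 = (\<lambda>n. if n \<in> {1..N} then q n - a0 * pb n else 0)"
      have Pv0: "?P v0 = 0"
      proof -
        have "?P v0 = ?P (\<lambda>n. (- a0) * pb n + q n)" by (rule Psi_cong) (simp add: v0_def)
        also have "\<dots> = (- a0) * ?P pb + ?P q" by (rule Psi_lin)
        also have "\<dots> = 0" using Ppos by (simp add: a0_def)
        finally show ?thesis .
      qed
      show "\<exists>!(\<alpha>, v). (\<forall>n. n \<notin> {1..N} \<longrightarrow> v n = 0) \<and> ?P v = 0 \<and> (\<forall>n\<in>{1..N}. q n = \<alpha> * pb n + v n)"
      proof (rule ex1I[where a="(a0, v0)"])
        show "case (a0, v0) of (\<alpha>, v) \<Rightarrow> (\<forall>n. n \<notin> {1..N} \<longrightarrow> v n = 0) \<and> ?P v = 0 \<and> (\<forall>n\<in>{1..N}. q n = \<alpha> * pb n + v n)"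
          using Pv0 by (simp add: v0_def)
        fix z assume "case z of (\<alpha>, v) \<Rightarrow> (\<forall>n. n \<notin> {1..N} \<longrightarrow> v n = 0) \<and> ?P v = 0 \<and> (\<forall>n\<in>{1..N}. q n = \<alpha> * pb n + v n)"
        then obtain a v where z: "z = (a, v)" and v0': "\<forall>n. n \<notin> {1..N} \<longrightarrow> v n = 0" and Pv: "?P v = 0"
          and qv: "\<forall>n\<in>{1..N}. q n = a * pb n + v n" by (cases z) auto
        have "?P q = ?P (\<lambda>n. a * pb n + v n)" by (rule Psi_cong) (use qv in simp)
        also have "\<dots> = a * ?P pb + ?P v" by (rule Psi_lin)
        also have "\<dots> = a * ?P pb" using Pv by simp
        finally have "a = a0" using Ppos by (simp add: a0_def)
        moreover have "v = v0"
        proof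
          fix n show "v n = v0 n"
            using v0' qv \<open>a = a0\<close> by (cases "n \<in> {1..N}") (auto simp: v0_def)
        qed
        ultimately show "z = (a0, v0)" using z by simp
      qed
    qed
  qed
  show ?thesis using part1 part2 part3 by blast
qed

end
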